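(* Assume $\mathfrak p<\mathfrak t$ and let $\lambda=\mathfrak p$. Assume: (i) $\mathcal B=\{B_\alpha:\alpha<\lambda\}$ exemplifies $\mathfrak p$; (ii) $\kappa<\lambda$ is a regular cardinal and $\bar A=\langle A_i:i<\kappa\rangle\subseteq[\omega]^{\aleph_0}$ is $\subseteq^*$-decreasing such that $A_i\cap B$ is infinite for all $i<\kappa$, $B\in\mathcal B$, and every pseudo-intersection $A$ of $\{A_i:i<\kappa\}$ has finite intersection with some $B\in\mathcal B$; (iii) $\mathrm{pr}:\lambda\times\lambda\to\lambda$ is a bijection with $\mathrm{pr}(\alpha_1,\alpha_2)\ge\alpha_1,\alpha_2$. Then there is a sequence $\langle\bar\eta^\alpha:\alpha\le\lambda\rangle$ such that: (a) $\bar\eta^\alpha\in\mathbf S_{\bar A}$ for $\alpha<\lambda$, and $\bar\eta^\lambda\in\mathbf S$; (b) $\langle\bar\eta^\alpha:\alpha\le\lambda\rangle$ is $\le^*$-increasing; (c) for each $\alpha<\lambda$, for all sufficiently large $n\in\mathrm{dom}(\bar\eta^{\alpha+1})$ we have $\mathrm{set}(\eta^{\alpha+1}_n)\cap B_\alpha\neq\emptyset$; (d)+(e) if $\alpha=\mathrm{pr}(\beta,\gamma)$, then for every choice of $X\in\{B_\beta\}\cup\{A_\beta:\beta<\kappa\}$ and $Y\in\{B_\gamma\}\cup\{A_\gamma:\gamma<\kappa\}$ (i.e. $X=B_\beta$, or $X=A_\beta$ when $\beta<\kappa$; likewise for $Y$), for every $n\in\mathrm{dom}(\bar\eta^{\alpha+1})$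 we have $\mathrm{set}(\eta^{\alpha+1}_n)\cap X\neq\emptyset$ and $\mathrm{set}(\eta^{\alpha+1}_n)\cap Y\neq\emptyset$, and the truth value of $\min(\mathrm{set}(\eta^{\alpha+1}_n)\cap X)<\min(\mathrm{set}(\eta^{\alpha+1}_n)\cap Y)$ is the same for all $n\in\mathrm{dom}(\bar\eta^{\alpha+1})$.
   Context: $[\omega]^{\aleph_0}$ is the set of infinite subsets of $\omega$; $A\subseteq^*B$ means $A\setminus B$ is finite; $A$ is a pseudo-intersection of $\mathcal C$ if $A\in[\omega]^{\aleph_0}$ and $A\subseteq^*C$ for all $C\in\mathcal C$. $\mathfrak p$ is the least cardinality of a family $\mathcal B\subseteq[\omega]^{\aleph_0}$ all of whose finite subfamilies have infinite intersection but which has no pseudo-intersection; $\mathfrak t$ is the least length of a $\subseteq^*$-decreasing sequence in $[\omega]^{\aleph_0}$ with no pseudo-intersection. $\mathcal B$ exemplifies $\mathfrak p$ if it is closed under finite intersections, has no pseudo-intersection, and $|\mathcal B|=\mathfrak p$. $\mathbf S$ is the family of all sequences $\bar\eta=\langle\eta_n:n\in B\rangle$ with $B\subseteq\omega$ infinite such that for each $n\in B$, $\eta_n$ is a function from $[n,k)$ to $\{0,1\}$ for some $k\in(n,\omega)$; $\mathrm{dom}(\bar\eta)=B$, $\mathrm{set}(\eta_n)=\{\ell:\eta_n(\ell)=1\}$, $\mathrm{set}(\bar\eta)=\bigcup_n\mathrm{set}(\eta_n)$. $\mathbf S_{\bar A}$ is the set of $\bar\eta\in\mathbf S$ with $\mathrm{set}(\bar\eta)\subseteq^*A_i$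 for all $i<\kappa$ and $\mathrm{set}(\eta_n)\ne\emptyset$ for all $n\in\mathrm{dom}(\bar\eta)$. $\eta\trianglelefteq\nu$ means $\nu$ extends $\eta$; $\bar\eta\le^*\bar\nu$ means that for all sufficiently large $n$, if $n\in\mathrm{dom}(\bar\nu)$ then $n\in\mathrm{dom}(\bar\eta)$ and $\eta_n\trianglelefteq\nu_n$. *)

theory Defs
  imports Main
begin

unbundle cardinal_syntax

definition almost_sub :: "nat set \<Rightarrow> nat set \<Rightarrow> bool" where
  "almost_sub A B \<longleftrightarrow> finite (A - B)"

definition pseudo_int :: "nat set \<Rightarrow> nat set set \<Rightarrow> bool" where
  "pseudo_int A \<C> \<longleftrightarrow> infinite A \<and> (\<forall>C\<in>\<C>. almost_sub A C)"

definition p_family :: "nat set set \<Rightarrow> bool" where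
  "p_family \<B> \<longleftrightarrow> (\<forall>B\<in>\<B>. infinite B) \<and>
     (\<forall>\<G>. finite \<G> \<and> \<G> \<noteq> {} \<and> \<G> \<subseteq> \<B> \<longrightarrow> infinite (\<Inter>\<G>)) \<and>
     \<not> (\<exists>A. pseudo_int A \<B>)"

definition is_frak_p :: "'a rel \<Rightarrow> bool" where
  "is_frak_p r \<longleftrightarrow> Card_order r \<and> (\<exists>\<B>. p_family \<B> \<and> (card_of \<B>) =o r) \<and>
     (\<forall>\<B>. p_family \<B> \<longrightarrow> r \<le>o (card_of \<B>))"

text \<open>lam < t, for an infinite cardinal order lam on a type 'a: every
  almost-decreasing sequence of infinite sets indexed by a subset K of Field lam
  (ordered by lam, hence of order type at most lam; every ordinal at most lam arises so)
  has a pseudo-intersection.\<close>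
definition less_frak_t :: "'a rel \<Rightarrow> bool" where
  "less_frak_t lam \<longleftrightarrow> (\<forall>(K::'a set) (X::'a \<Rightarrow> nat set). K \<subseteq> Field lam \<longrightarrow>
      (\<forall>i\<in>K. infinite (X i)) \<longrightarrow>
      (\<forall>i\<in>K. \<forall>j\<in>K. (i, j) \<in> lam \<longrightarrow> almost_sub (X j) (X i)) \<longrightarrow>
      (\<exists>A. pseudo_int A (X ` K)))"

definition exemplifies_p :: "'a rel \<Rightarrow> nat set set \<Rightarrow> bool" where
  "exemplifies_p lam \<B> \<longleftrightarrow> (\<forall>B\<in>\<B>. infinite B) \<and> (\<forall>X\<in>\<B>. \<forall>Y\<in>\<B>. X \<inter> Y \<in> \<B>) \<and>
     \<not> (\<exists>A. pseudo_int A \<B>) \<and> (card_of \<B>) =o lam"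

text \<open>Regular (infinite) cardinal given as the initial segment below k of the well-order lam.\<close>
definition regular_below :: "'a rel \<Rightarrow> 'a \<Rightarrow> bool" where
  "regular_below lam k \<longleftrightarrow> infinite (underS lam k) \<and>
     Card_order (Restr lam (underS lam k)) \<and> regularCard (Restr lam (underS lam k))"

definition strict_lt :: "'a rel \<Rightarrow> 'a \<Rightarrow> 'a \<Rightarrow> bool" where
  "strict_lt lam a b \<longleftrightarrow> (a, b) \<in> lam \<and> a \<noteq> b"

definition is_succ :: "'a rel \<Rightarrow> 'a \<Rightarrow> 'a \<Rightarrow> bool" where
  "is_succ lam a b \<longleftrightarrow> strict_lt lam a b \<and> (\<forall>c. strict_lt lam a c \<longrightarrow> (b, c) \<in> lam)"

text \<open>A finite 0-1 function eta_n with domain [n,k) is a partial map nat to bool;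
  a sequence bar-eta is a map n to option of such, domain = where it is defined.\<close>
type_synonym seqS = "nat \<Rightarrow> (nat \<rightharpoonup> bool) option"

definition sdom :: "seqS \<Rightarrow> nat set" where
  "sdom e = {n. e n \<noteq> None}"

definition fset :: "(nat \<rightharpoonup> bool) \<Rightarrow> nat set" where
  "fset \<eta> = {l. \<eta> l = Some True}"

definition sset :: "seqS \<Rightarrow> nat set" where
  "sset e = (\<Union>n\<in>sdom e. fset (the (e n)))"

definition in_S :: "seqS \<Rightarrow> bool" where
  "in_S e \<longleftrightarrow> infinite (sdom e) \<and>
     (\<forall>n \<eta>. e n = Some \<eta> \<longrightarrow> (\<exists>k>n. dom \<eta> = {n..<k}))"

definition in_S_A :: "'a rel \<Rightarrow> 'a \<Rightarrow> ('a \<Rightarrow> nat set) \<Rightarrow> seqS \<Rightarrow> bool" where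
  "in_S_A lam k A e \<longleftrightarrow> in_S e \<and> (\<forall>i. strict_lt lam i k \<longrightarrow> almost_sub (sset e) (A i)) \<and>
     (\<forall>n\<in>sdom e. fset (the (e n)) \<noteq> {})"

definition le_star :: "seqS \<Rightarrow> seqS \<Rightarrow> bool" where
  "le_star e f \<longleftrightarrow> (\<exists>N. \<forall>n\<ge>N. n \<in> sdom f \<longrightarrow>
      n \<in> sdom e \<and> the (e n) \<subseteq>\<^sub>m the (f n))"

definition choices :: "'a rel \<Rightarrow> 'a \<Rightarrow> ('a \<Rightarrow> nat set) \<Rightarrow> ('a \<Rightarrow> nat set) \<Rightarrow> 'a \<Rightarrow> nat set set" where
  "choices lam k A B b = {B b} \<union> (if strict_lt lam b k then {A b} else {})"

end

theory Submission
  imports Defs "HOL-Library.Countable" "HOL-Library.Infinite_Set"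
begin

lemma t_transfer:
  fixes X :: "'a \<Rightarrow> ('c::countable) set"
  assumes lt: "less_frak_t lam" and K: "K \<subseteq> Field lam" and inf: "\<forall>i\<in>K. infinite (X i)"
    and mono: "\<forall>i\<in>K. \<forall>j\<in>K. (i,j)\<in>lam \<longrightarrow> finite (X j - X i)" and ne: "K \<noteq> {}"
  shows "\<exists>Z. infinite Z \<and> (\<forall>i\<in>K. finite (Z - X i))"
proof -
  let ?X = "\<lambda>i. to_nat ` X i"
  have "\<exists>P. pseudo_int P (?X ` K)"
    using lt[unfolded less_frak_t_def, rule_format, of K ?X] K inf mono
    by (auto simp: almost_sub_def finite_image_iff image_set_diff[symmetric] inj_on_def
        intro: finite_imageI)
  then obtain P where P: "infinite P" "\<forall>i\<in>K. finite (P - ?X i)"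
    by (auto simp: pseudo_int_def almost_sub_def)
  obtain i0 where i0: "i0 \<in> K" using ne by auto
  define Z :: "'c set" where "Z = to_nat -` P"
  have "P \<inter> ?X i0 \<subseteq> to_nat ` Z" unfolding Z_def by blast
  moreover have "infinite (P \<inter> ?X i0)"
  proof
    assume "finite (P \<inter> ?X i0)"
    then have "finite ((P \<inter> ?X i0) \<union> (P - ?X i0))" using P i0 by auto
    moreover have "(P \<inter> ?X i0) \<union> (P - ?X i0) = P" by auto
    ultimately show False using P by simp
  qed
  ultimately have "infinite Z" using finite_subset finite_imageI by metis
  moreover have "finite (Z - X i)" if "i \<in> K" for i
  proof -
    have "to_nat ` (Z - X i) \<subseteq> P - ?X i" unfolding Z_def by (auto simp: inj_eq)
    then have "finite (to_nat ` (Z - X i))" using P that finite_subset by blast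
    then show ?thesis using finite_imageD inj_on_subset inj_to_nat by blast
  qed
  ultimately show ?thesis by blast
qed

lemma p_transfer:
  fixes F :: "('c::countable) set set" and lam :: "'a rel"
  assumes pp: "is_frak_p lam" and card: "|F| <o lam" and inf: "\<forall>S\<in>F. infinite S"
    and sfip: "\<forall>G. finite G \<and> G \<noteq> {} \<and> G \<subseteq> F \<longrightarrow> infinite (\<Inter>G)" and ne: "F \<noteq> {}"
  shows "\<exists>Z. infinite Z \<and> (\<forall>S\<in>F. finite (Z - S))"
proof -
  let ?B = "image to_nat ` F"
  have injI: "inj_on (image to_nat) G" for G :: "'c set set"
    by (simp add: inj_on_def inj_image_eq_iff)
  have c1: "|?B| <o lam" using card card_of_image ordLeq_ordLess_trans by blast
  have np: "\<not> p_family ?B"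
  proof
    assume "p_family ?B"
    then have "lam \<le>o |?B|" using pp unfolding is_frak_p_def by blast
    then show False using c1 not_ordLess_ordLeq by blast
  qed
  have sf: "infinite (\<Inter>G)" if G: "finite G" "G \<noteq> {}" "G \<subseteq> ?B" for G
  proof -
    define G' where "G' = {S\<in>F. to_nat ` S \<in> G}"
    have GG: "image to_nat ` G' = G" using G(3) unfolding G'_def by auto
    have fG': "finite G'" using GG G(1) injI finite_imageD by metis
    have nG': "G' \<noteq> {}" using GG G(2) by auto
    have "\<Inter>G = to_nat ` (\<Inter>G')"
    proof
      show "to_nat ` (\<Inter>G') \<subseteq> \<Inter>G" using GG by auto
      show "\<Inter>G \<subseteq> to_nat ` (\<Inter>G')"
      proof
        fix z assume z: "z \<in> \<Inter>G"
        obtain S1 where S1: "S1 \<in> G'" using nG' by auto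
        then have "z \<in> to_nat ` S1" using z GG by auto
        then obtain y :: 'c where y: "z = to_nat y" by blast
        have "y \<in> S" if "S \<in> G'" for S
        proof -
          have "z \<in> to_nat ` S" using z GG that by auto
          then show ?thesis using y by (auto simp: inj_eq)
        qed
        then show "z \<in> to_nat ` (\<Inter>G')" using y by auto
      qed
    qed
    moreover have "infinite (\<Inter>G')" using sfip fG' nG' unfolding G'_def by auto
    ultimately show ?thesis using finite_imageD inj_on_subset inj_to_nat by (metis subset_UNIV)
  qed
  have "\<exists>P. pseudo_int P ?B"
    using np inf sf unfolding p_family_def by (auto simp: finite_image_iff inj_on_def)
  then obtain P where P: "infinite P" "\<forall>S\<in>F. finite (P - to_nat ` S)"
    by (auto simp: pseudo_int_def almost_sub_def)
  obtain S0 where S0: "S0 \<in> F" using ne by auto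
  define Z :: "'c set" where "Z = to_nat -` P"
  have "P \<inter> to_nat ` S0 \<subseteq> to_nat ` Z" unfolding Z_def by blast
  moreover have "infinite (P \<inter> to_nat ` S0)"
  proof
    assume "finite (P \<inter> to_nat ` S0)"
    then have "finite ((P \<inter> to_nat ` S0) \<union> (P - to_nat ` S0))" using P S0 by auto
    moreover have "(P \<inter> to_nat ` S0) \<union> (P - to_nat ` S0) = P" by auto
    ultimately show False using P by simp
  qed
  ultimately have "infinite Z" using finite_subset finite_imageI by metis
  moreover have "finite (Z - S)" if "S \<in> F" for S
  proof -
    have "to_nat ` (Z - S) \<subseteq> P - to_nat ` S" unfolding Z_def by (auto simp: inj_eq)
    then have "finite (to_nat ` (Z - S))" using P that finite_subset by blast
    then show ?thesis using finite_imageD inj_on_subset inj_to_nat by blast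
  qed
  ultimately show ?thesis by blast
qed

definition blk :: "nat \<Rightarrow> bool list \<Rightarrow> (nat \<rightharpoonup> bool)" where
  "blk x bs = (\<lambda>l. if x \<le> l \<and> l < x + length bs then Some (bs ! (l - x)) else None)"

definition sparse :: "seqS \<Rightarrow> bool" where
  "sparse e \<longleftrightarrow> (\<forall>x\<in>sdom e. \<forall>y\<in>sdom e. x < y \<longrightarrow> (\<forall>l\<in>dom (the (e x)). l < y))"

definition subseq :: "seqS \<Rightarrow> seqS \<Rightarrow> bool" where
  "subseq e' e \<longleftrightarrow> (\<forall>x. e' x = None \<or> e' x = e x)"

definition nxt :: "nat set \<Rightarrow> nat \<Rightarrow> nat" where
  "nxt D x = (LEAST y. y \<in> D \<and> x < y)"

lemma dom_blk: "dom (blk x bs) = {x..<x + length bs}"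
  by (auto simp: blk_def dom_def)

lemma in_S_block:
  assumes "in_S e" "x \<in> sdom e"
  shows "\<exists>k>x. dom (the (e x)) = {x..<k}"
  using assms by (auto simp: in_S_def sdom_def)

lemma in_S_block_facts:
  assumes "in_S e" "x \<in> sdom e"
  shows "x \<in> dom (the (e x))" "finite (dom (the (e x)))" "fset (the (e x)) \<subseteq> dom (the (e x))"
    "\<forall>l\<in>dom (the (e x)). x \<le> l"
  using in_S_block[OF assms] by (auto simp: fset_def)

lemma pad:
  assumes "in_S e" "x \<in> sdom e" "\<forall>l\<in>dom (the (e x)). l < y"
  shows "\<exists>bs. length bs = y - x \<and> the (e x) \<subseteq>\<^sub>m blk x bs \<and> fset (blk x bs) = fset (the (e x))"
proof -
  let ?\<eta> = "the (e x)"
  define bs where "bs = map (\<lambda>l. ?\<eta> l = Some True) [x..<y]"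
  have xy: "x < y" using assms in_S_block_facts(1)[OF assms(1,2)] by auto
  have lx: "\<forall>l\<in>dom ?\<eta>. x \<le> l" using in_S_block_facts[OF assms(1,2)] by auto
  have len: "length bs = y - x" by (simp add: bs_def)
  have b: "blk x bs l = (if x \<le> l \<and> l < y then Some (?\<eta> l = Some True) else None)" for l
    using xy by (auto simp: blk_def bs_def len)
  have "?\<eta> \<subseteq>\<^sub>m blk x bs"
    unfolding map_le_def
  proof
    fix l assume l: "l \<in> dom ?\<eta>"
    then obtain v where v: "?\<eta> l = Some v" by auto
    show "?\<eta> l = blk x bs l" using l v lx assms(3) b[of l] by auto
  qed
  moreover have "fset (blk x bs) = fset ?\<eta>"
    using lx assms(3) by (auto simp: fset_def b)
  ultimately show ?thesis using len by blast
qed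

lemma nxt:
  assumes "infinite D"
  shows "nxt D x \<in> D" "x < nxt D x" "\<And>y. y \<in> D \<Longrightarrow> x < y \<Longrightarrow> nxt D x \<le> y"
proof -
  obtain y where "y \<in> D" "x < y" using assms infinite_nat_iff_unbounded by blast
  then have "nxt D x \<in> D \<and> x < nxt D x" unfolding nxt_def by (metis (mono_tags, lifting) LeastI)
  then show "nxt D x \<in> D" "x < nxt D x" by auto
  show "\<And>y. y \<in> D \<Longrightarrow> x < y \<Longrightarrow> nxt D x \<le> y" unfolding nxt_def by (simp add: Least_le)
qed

lemma finite_cols: "finite {(x, bs). x < (N::nat) \<and> length (bs::bool list) = h x}"
proof -
  have "{(x, bs). x < N \<and> length (bs::bool list) = h x} \<subseteq> (\<Union>x<N. {x} \<times> {bs. set bs \<subseteq> UNIV \<and> length bs = h x})"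
    by auto
  moreover have "finite (\<Union>x<N. {x} \<times> {bs::bool list. set bs \<subseteq> UNIV \<and> length bs = h x})"
    using finite_lists_length_eq[of "UNIV::bool set"] by (intro finite_UN_I) auto
  ultimately show ?thesis using finite_subset by blast
qed

lemma sset_threshold:
  assumes "in_S e" "finite (sset e - A)"
  shows "\<exists>N. \<forall>x\<in>sdom e. x \<ge> N \<longrightarrow> fset (the (e x)) \<subseteq> A"
proof -
  define N where "N = Suc (Max (insert 0 (sset e - A)))"
  have "fset (the (e x)) \<subseteq> A" if "x \<in> sdom e" "x \<ge> N" for x
  proof
    fix l assume l: "l \<in> fset (the (e x))"
    then have "l \<ge> x" using in_S_block_facts[OF assms(1) that(1)] by auto
    then have "l \<ge> N" using that by auto
    moreover have "l \<in> sset e" using l that(1) by (auto simp: sset_def)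
    moreover have "m \<in> sset e - A \<Longrightarrow> m < N" for m using assms(2) unfolding N_def
      by (simp add: le_imp_less_Suc)
    ultimately show "l \<in> A" by force
  qed
  then show ?thesis by blast
qed

lemma le_star_refl: "le_star e e"
  by (auto simp: le_star_def)

lemma le_star_trans: assumes "le_star e f" "le_star f g" shows "le_star e g"
proof -
  obtain N1 where 1: "\<forall>n\<ge>N1. n \<in> sdom f \<longrightarrow> n \<in> sdom e \<and> the (e n) \<subseteq>\<^sub>m the (f n)"
    using assms(1) by (auto simp: le_star_def)
  obtain N2 where 2: "\<forall>n\<ge>N2. n \<in> sdom g \<longrightarrow> n \<in> sdom f \<and> the (f n) \<subseteq>\<^sub>m the (g n)"
    using assms(2) by (auto simp: le_star_def)
  show ?thesis unfolding le_star_def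
    by (rule exI[of _ "max N1 N2"]) (metis 1 2 map_le_trans max.boundedE)
qed

lemma subseq_facts:
  assumes "subseq e' e"
  shows "sdom e' \<subseteq> sdom e" "\<And>x. x \<in> sdom e' \<Longrightarrow> e' x = e x" "sset e' \<subseteq> sset e"
proof -
  show 1: "sdom e' \<subseteq> sdom e" "\<And>x. x \<in> sdom e' \<Longrightarrow> e' x = e x"
    using assms by (auto simp: subseq_def sdom_def) (metis option.distinct(1))+
  show "sset e' \<subseteq> sset e" unfolding sset_def using 1 by force
qed

lemma subseq_in_S:
  assumes "in_S e" "subseq e' e" "infinite (sdom e')"
  shows "in_S e'"
  using assms unfolding in_S_def subseq_def by (metis option.distinct(1))

lemma subseq_in_S_A:
  assumes "in_S_A lam k A e" "subseq e' e" "infinite (sdom e')"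
  shows "in_S_A lam k A e'"
proof -
  have "in_S e'" using assms subseq_in_S unfolding in_S_A_def by blast
  moreover have "almost_sub (sset e') (A i)" if "strict_lt lam i k" for i
    using assms(1) that subseq_facts(3)[OF assms(2)] unfolding in_S_A_def almost_sub_def
    by (meson Diff_mono finite_subset order_refl)
  moreover have "fset (the (e' n)) \<noteq> {}" if "n \<in> sdom e'" for n
    using assms(1) that subseq_facts[OF assms(2)] unfolding in_S_A_def by auto
  ultimately show ?thesis unfolding in_S_A_def by blast
qed

lemma subseq_le_star:
  assumes "le_star u e" "subseq e' e"
  shows "le_star u e'"
  using assms subseq_facts[OF assms(2)] unfolding le_star_def by (metis subsetD)

lemma subseq_le_star2:
  assumes "subseq e' e"
  shows "le_star e e'"
  using subseq_facts[OF assms] unfolding le_star_def by auto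

lemma sparsify:
  assumes "in_S e"
  shows "\<exists>e'. subseq e' e \<and> infinite (sdom e') \<and> sparse e'"
proof -
  have infd: "infinite (sdom e)" using assms by (simp add: in_S_def)
  have ex: "\<exists>y. y \<in> sdom e \<and> (\<forall>l\<in>dom (the (e x)). l < y)" if "x \<in> sdom e" for x
  proof -
    have "finite (dom (the (e x)))" using in_S_block_facts[OF assms that] by auto
    then obtain M where "\<forall>l\<in>dom (the (e x)). l < M"
      by (metis finite_nat_set_iff_bounded)
    moreover obtain y where "y \<in> sdom e" "M \<le> y" using infd infinite_nat_iff_unbounded_le by blast
    ultimately show ?thesis by (meson order_less_le_trans)
  qed
  define st where "st x = (LEAST y. y \<in> sdom e \<and> (\<forall>l\<in>dom (the (e x)). l < y))" for x
  have st: "st x \<in> sdom e" "\<forall>l\<in>dom (the (e x)). l < st x" if "x \<in> sdom e" for x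
    using LeastI_ex[OF ex[OF that]] unfolding st_def by auto
  obtain x0 where x0: "x0 \<in> sdom e" using infd by (metis finite.emptyI ex_in_conv)
  define f where "f j = (st ^^ j) x0" for j
  have fin: "f j \<in> sdom e" for j by (induct j) (auto simp: f_def x0 st)
  have fS: "f (Suc j) = st (f j)" for j by (simp add: f_def)
  have fbig: "\<forall>l\<in>dom (the (e (f j))). l < f (Suc j)" for j using st(2)[OF fin[of j]] fS by simp
  have fsm: "f j < f (Suc j)" for j using fbig[of j] in_S_block_facts(1)[OF assms fin[of j]] by auto
  have sm: "strict_mono f" using fsm strict_mono_Suc_iff by blast
  define e' where "e' x = (if x \<in> range f then e x else None)" for x
  have sub: "subseq e' e" by (auto simp: subseq_def e'_def)
  have sd: "sdom e' = range f" using fin by (auto simp: sdom_def e'_def)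
  have "infinite (range f)" using sm strict_mono_imp_inj_on range_inj_infinite by blast
  moreover have "sparse e'" unfolding sparse_def sd
  proof (intro ballI impI)
    fix x y l assume "x \<in> range f" "y \<in> range f" "x < y" and l: "l \<in> dom (the (e' x))"
    then obtain i j where ij: "x = f i" "y = f j" by auto
    then have "i < j" using \<open>x < y\<close> sm by (metis not_less_iff_gr_or_eq strict_mono_less)
    then have "f (Suc i) \<le> f j" using sm by (simp add: strict_mono_less_eq)
    moreover have "l < f (Suc i)" using fbig[of i] l ij by (auto simp: e'_def)
    ultimately show "l < y" using ij by simp
  qed
  ultimately show ?thesis using sub sd by metis
qed

definition Wset :: "('a \<Rightarrow> seqS) \<Rightarrow> nat set \<Rightarrow> 'a \<Rightarrow> (nat \<times> bool list) set" where
  "Wset g D \<beta> = {(x,bs). x \<in> D \<and> length bs = nxt D x - x \<and> x \<in> sdom (g \<beta>) \<and> the (g \<beta> x) \<subseteq>\<^sub>m blk x bs}"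

definition mkseq :: "(nat \<times> bool list) set \<Rightarrow> seqS" where
  "mkseq Z = (\<lambda>x. if \<exists>bs. (x,bs) \<in> Z then Some (blk x (SOME bs. (x,bs) \<in> Z)) else None)"

definition Yset :: "nat set \<Rightarrow> (nat \<times> bool list) set" where
  "Yset Y = {(x,bs). fset (blk x bs) \<subseteq> Y}"

lemma fset_blk_finite: "finite (fset (blk x bs))"
proof -
  have "fset (blk x bs) \<subseteq> dom (blk x bs)" by (auto simp: fset_def)
  then show ?thesis using dom_blk finite_subset by (metis finite_atLeastLessThan)
qed

lemma core_infinite:
  assumes S: "in_S e" "sparse e" and D: "infinite D" "finite (D - sdom e)"
    and Q: "\<exists>N. \<forall>x\<ge>N. Q x"
  shows "infinite {(x, bs). x \<in> D \<and> length bs = nxt D x - x \<and> x \<in> sdom e \<and>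
            the (e x) \<subseteq>\<^sub>m blk x bs \<and> fset (blk x bs) = fset (the (e x)) \<and> Q x}" (is "infinite ?S")
proof -
  obtain N1 where N1: "\<forall>x\<ge>N1. Q x" using Q by blast
  define M where "M = Max (insert 0 (D - sdom e))"
  define N0 where "N0 = max N1 (Suc M)"
  have N0: "N1 \<le> N0" "Suc M \<le> N0" unfolding N0_def by auto
  have good: "x \<in> sdom e" if "x \<in> D" "x \<ge> N0" for x
  proof (rule ccontr)
    assume "x \<notin> sdom e"
    then have "x \<in> insert 0 (D - sdom e)" using that by blast
    then have "x \<le> M" unfolding M_def by (rule Max_ge[rotated]) (use D(2) in simp)
    then show False using that(2) N0 by linarith
  qed
  have "{x \<in> D. x \<ge> N0} \<subseteq> fst ` ?S"
  proof
    fix x assume x: "x \<in> {x \<in> D. x \<ge> N0}"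
    have xe: "x \<in> sdom e" using good x by blast
    have nD: "nxt D x \<in> D" "x < nxt D x" using nxt[OF D(1)] by auto
    then have ne: "nxt D x \<in> sdom e" using good[of "nxt D x"] x by simp
    have "\<forall>l\<in>dom (the (e x)). l < nxt D x" using S(2) xe ne nD unfolding sparse_def by blast
    then obtain bs where bs: "length bs = nxt D x - x" "the (e x) \<subseteq>\<^sub>m blk x bs" "fset (blk x bs) = fset (the (e x))"
      using pad[OF S(1) xe] by blast
    have "Q x" using N1 x N0 by simp
    then have "(x,bs) \<in> ?S" using x xe bs by simp
    then show "x \<in> fst ` ?S" using image_eqI[of x fst "(x,bs)"] by simp
  qed
  moreover have "infinite {x \<in> D. x \<ge> N0}"
  proof
    assume "finite {x \<in> D. x \<ge> N0}"
    moreover have "D \<subseteq> {x \<in> D. x \<ge> N0} \<union> {..<N0}" by auto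
    ultimately show False using D(1) by (meson finite_UnI finite_lessThan finite_subset)
  qed
  ultimately show ?thesis using finite_imageI finite_subset by blast
qed

locale mk =
  fixes Z :: "(nat \<times> bool list) set" and g :: "'a \<Rightarrow> seqS" and D :: "nat set" and \<beta>0 :: 'a
  assumes Zinf: "infinite Z" and D: "infinite D" and Z0: "finite (Z - Wset g D \<beta>0)"
begin

definition "Z' = Z \<inter> Wset g D \<beta>0"
definition "\<nu> = mkseq Z'"
definition "sel x = (SOME bs. (x,bs) \<in> Z')"

lemma sdom_nu_iff: "x \<in> sdom \<nu> \<longleftrightarrow> (\<exists>bs. (x,bs) \<in> Z')"
  by (simp add: sdom_def \<nu>_def mkseq_def)

lemma sdom_nu: "sdom \<nu> = fst ` Z'"
  unfolding Domain_fst[symmetric] using sdom_nu_iff by (auto simp: Domain_iff)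

lemma nu_at: assumes "x \<in> sdom \<nu>" shows "\<nu> x = Some (blk x (sel x))" "(x, sel x) \<in> Z'"
proof -
  have ex: "\<exists>bs. (x,bs) \<in> Z'" using assms sdom_nu_iff by blast
  then show "\<nu> x = Some (blk x (sel x))" by (simp add: \<nu>_def mkseq_def sel_def)
  show "(x, sel x) \<in> Z'" unfolding sel_def using someI_ex[OF ex] .
qed

lemma sel_props: assumes "x \<in> sdom \<nu>"
  shows "(x, sel x) \<in> Z" "x \<in> D" "length (sel x) = nxt D x - x"
  using nu_at(2)[OF assms] by (auto simp: Z'_def Wset_def)

lemma Z'inf: "infinite Z'"
proof
  assume "finite Z'"
  then have "finite (Z' \<union> (Z - Wset g D \<beta>0))" using Z0 by simp
  moreover have "Z' \<union> (Z - Wset g D \<beta>0) = Z" by (auto simp: Z'_def)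
  ultimately show False using Zinf by simp
qed

lemma nu_in_S: "in_S \<nu>"
proof -
  have "infinite (sdom \<nu>)"
  proof
    assume fin: "finite (sdom \<nu>)"
    then obtain N where N: "\<forall>x\<in>sdom \<nu>. x < N" by (metis finite_nat_set_iff_bounded)
    have "Z' \<subseteq> {(x, bs). x < N \<and> length bs = nxt D x - x}"
    proof
      fix p assume p: "p \<in> Z'"
      obtain x bs where xb: "p = (x,bs)" by (cases p)
      have "x \<in> sdom \<nu>" using sdom_nu_iff p xb by blast
      then have "x < N" using N by blast
      moreover have "p \<in> Wset g D \<beta>0" using p by (simp add: Z'_def)
      then have "length bs = nxt D x - x" using xb by (simp add: Wset_def)
      ultimately show "p \<in> {(x, bs). x < N \<and> length bs = nxt D x - x}" using xb by simp
    qed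
    from finite_subset[OF this finite_cols[of N "\<lambda>x. nxt D x - x"]] show False using Z'inf by simp
  qed
  moreover have "\<exists>k>n. dom \<eta> = {n..<k}" if "\<nu> n = Some \<eta>" for n \<eta>
  proof -
    have n: "n \<in> sdom \<nu>" using that by (simp add: sdom_def)
    have "\<eta> = blk n (sel n)" using nu_at(1)[OF n] that by simp
    then have "dom \<eta> = {n..<nxt D n}" using sel_props[OF n] nxt[OF D, of n] by (simp add: dom_blk)
    then show ?thesis using nxt[OF D, of n] by blast
  qed
  ultimately show ?thesis unfolding in_S_def by blast
qed

lemma nu_sparse: "sparse \<nu>"
  unfolding sparse_def
proof (intro ballI impI)
  fix x y l assume x: "x \<in> sdom \<nu>" and y: "y \<in> sdom \<nu>" and xy: "x < y" and l: "l \<in> dom (the (\<nu> x))"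
  have "dom (the (\<nu> x)) = {x..<nxt D x}" using nu_at(1)[OF x] sel_props[OF x] nxt[OF D, of x]
    by (simp add: dom_blk)
  moreover have "nxt D x \<le> y" using nxt(3)[OF D] sel_props(2)[OF y] xy by blast
  ultimately show "l < y" using l by auto
qed

lemma fin_fst_bound:
  fixes E :: "(nat \<times> bool list) set"
  assumes "finite E"
  shows "\<exists>N. \<forall>x\<ge>N. x \<notin> fst ` E"
proof -
  have "finite (fst ` E)" using assms by simp
  then obtain N where "\<forall>x\<in>fst ` E. x < N" by (metis finite_nat_set_iff_bounded)
  then show ?thesis by (meson not_le)
qed

lemma nu_le_star:
  assumes "finite (Z - Wset g D \<beta>)"
  shows "le_star (g \<beta>) \<nu>"
proof -
  obtain N where N: "\<forall>x\<ge>N. x \<notin> fst ` (Z - Wset g D \<beta>)" using fin_fst_bound[OF assms] by blast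
  have "n \<in> sdom (g \<beta>) \<and> the (g \<beta> n) \<subseteq>\<^sub>m the (\<nu> n)" if "n \<ge> N" "n \<in> sdom \<nu>" for n
  proof -
    have "(n, sel n) \<in> Wset g D \<beta>" using N that sel_props(1)[OF that(2)] by force
    then show ?thesis using nu_at(1)[OF that(2)] by (auto simp: Wset_def)
  qed
  then show ?thesis unfolding le_star_def by blast
qed

lemma nu_Y:
  assumes "finite (Z - Yset Y)"
  shows "finite (sset \<nu> - Y)"
proof -
  let ?E = "fst ` (Z - Yset Y)"
  have "sset \<nu> - Y \<subseteq> (\<Union>x\<in>?E. fset (blk x (sel x)))"
  proof
    fix l assume l: "l \<in> sset \<nu> - Y"
    then obtain x where x: "x \<in> sdom \<nu>" "l \<in> fset (the (\<nu> x))" by (auto simp: sset_def)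
    then have lb: "l \<in> fset (blk x (sel x))" using nu_at(1)[OF x(1)] by simp
    have "x \<in> ?E"
    proof (rule ccontr)
      assume "x \<notin> ?E"
      then have "(x, sel x) \<in> Yset Y" using sel_props(1)[OF x(1)] by force
      then show False using lb l by (auto simp: Yset_def)
    qed
    then show "l \<in> (\<Union>x\<in>?E. fset (blk x (sel x)))" using lb by blast
  qed
  moreover have "finite (\<Union>x\<in>?E. fset (blk x (sel x)))"
    using assms fset_blk_finite by blast
  ultimately show ?thesis using finite_subset by blast
qed

lemma nu_nonempty:
  assumes "\<forall>x\<in>sdom (g \<beta>0). fset (the (g \<beta>0 x)) \<noteq> {}"
  shows "\<forall>n\<in>sdom \<nu>. fset (the (\<nu> n)) \<noteq> {}"
proof
  fix n assume n: "n \<in> sdom \<nu>"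
  have w: "(n, sel n) \<in> Wset g D \<beta>0" using nu_at(2)[OF n] by (simp add: Z'_def)
  then have "fset (the (g \<beta>0 n)) \<subseteq> fset (blk n (sel n))"
    by (auto simp: Wset_def fset_def map_le_def) (metis domI)
  moreover have "n \<in> sdom (g \<beta>0)" using w by (simp add: Wset_def)
  ultimately show "fset (the (\<nu> n)) \<noteq> {}" using assms nu_at(1)[OF n] by auto
qed

end

definition Good :: "'l rel \<Rightarrow> 'l \<Rightarrow> ('l \<Rightarrow> nat set) \<Rightarrow> seqS \<Rightarrow> bool" where
  "Good lam k A e \<longleftrightarrow> in_S_A lam k A e \<and> sparse e"

locale main =
  fixes lam :: "'l rel" and B A :: "'l \<Rightarrow> nat set" and k :: 'l
  assumes lam_card: "card_order lam"
    and lam_p: "is_frak_p lam"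
    and p_lt_t: "less_frak_t lam"
    and exB: "exemplifies_p lam (range B)"
    and k_reg: "regular_below lam k"
    and A_inf: "\<forall>i. strict_lt lam i k \<longrightarrow> infinite (A i)"
    and A_dec: "\<forall>i j. strict_lt lam i j \<and> strict_lt lam j k \<longrightarrow> almost_sub (A j) (A i)"
    and A_B: "\<forall>i \<alpha>. strict_lt lam i k \<longrightarrow> infinite (A i \<inter> B \<alpha>)"
begin

abbreviation "I \<equiv> {i. strict_lt lam i k}"

lemma Fld: "Field lam = UNIV" and Co: "Card_order lam"
  using card_order_on_Card_order[OF lam_card] by auto

lemma WO: "wo_rel lam"
  unfolding wo_rel_def using card_order_on_well_order_on[OF lam_card] Fld by simp

lemma refl: "(a,a) \<in> lam"
  using wo_rel.REFL[OF WO] Fld unfolding refl_on_def by auto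

lemma total: "(a,b) \<in> lam \<or> (b,a) \<in> lam"
  using wo_rel.TOTALS[OF WO] Fld by auto

lemma transl: "(a,b) \<in> lam \<Longrightarrow> (b,c) \<in> lam \<Longrightarrow> (a,c) \<in> lam"
  using wo_rel.TRANS[OF WO] unfolding trans_def by blast

lemma antisyml: "(a,b) \<in> lam \<Longrightarrow> (b,a) \<in> lam \<Longrightarrow> a = b"
  using wo_rel.ANTISYM[OF WO] unfolding antisym_def by blast

lemma underS_eq: "underS lam a = {b. strict_lt lam b a}"
  by (auto simp: underS_def strict_lt_def)

lemma card_under: "|{b. strict_lt lam b a}| <o lam"
  using card_of_underS[OF Co, of a] Fld underS_eq by simp

lemma infUNIV: "infinite (UNIV :: 'l set)"
  using k_reg unfolding regular_below_def using infinite_super[OF subset_UNIV] by blast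

lemma I_ne: "I \<noteq> {}"
  using k_reg unfolding regular_below_def underS_eq by (metis finite.emptyI)

lemma finite_max:
  assumes "finite K1" "K1 \<noteq> {}"
  shows "\<exists>\<gamma>\<in>K1. \<forall>\<beta>\<in>K1. (\<beta>, \<gamma>) \<in> lam"
  using assms
proof (induction K1 rule: finite_ne_induct)
  case (singleton x) then show ?case using refl by auto
next
  case (insert x F)
  then obtain \<gamma> where g: "\<gamma> \<in> F" "\<forall>\<beta>\<in>F. (\<beta>, \<gamma>) \<in> lam" by blast
  show ?case
  proof (cases "(\<gamma>, x) \<in> lam")
    case True
    have "\<forall>\<beta>\<in>insert x F. (\<beta>, x) \<in> lam"
    proof
      fix \<beta> assume "\<beta> \<in> insert x F"
      then show "(\<beta>, x) \<in> lam"
      proof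
        assume "\<beta> = x" then show ?thesis using refl by simp
      next
        assume "\<beta> \<in> F" then show ?thesis using transl[OF _ True] g(2) by blast
      qed
    qed
    then show ?thesis by blast
  next
    case False then have "(x, \<gamma>) \<in> lam" using total by blast
    then show ?thesis using g by blast
  qed
qed

lemma A_tower:
  assumes "\<forall>i\<in>I. infinite (X i)" "\<forall>i j. strict_lt lam i j \<and> strict_lt lam j k \<longrightarrow> finite (X j - X i)"
  shows "\<exists>P::nat set. infinite P \<and> (\<forall>i\<in>I. finite (P - X i))"
proof (rule t_transfer[OF p_lt_t])
  show "I \<subseteq> Field lam" using Fld by simp
  show "\<forall>i\<in>I. infinite (X i)" using assms by blast
  show "I \<noteq> {}" using I_ne .
  show "\<forall>i\<in>I. \<forall>j\<in>I. (i, j) \<in> lam \<longrightarrow> finite (X j - X i)"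
  proof (intro ballI impI)
    fix i j assume "i \<in> I" "j \<in> I" "(i,j) \<in> lam"
    then show "finite (X j - X i)" using assms(2) by (cases "i = j") (auto simp: strict_lt_def)
  qed
qed

lemma base: "\<exists>e. Good lam k A e"
proof -
  obtain P :: "nat set" where P: "infinite P" "\<forall>i\<in>I. finite (P - A i)"
    using A_tower[of A] A_inf A_dec by (auto simp: almost_sub_def)
  define e :: seqS where "e x = (if x \<in> P then Some [x \<mapsto> True] else None)" for x
  have sd: "sdom e = P" by (auto simp: sdom_def e_def)
  have ss: "sset e = P" by (auto simp: sset_def sd e_def fset_def)
  have "in_S e" unfolding in_S_def sd using P(1)
    by (auto simp: e_def split: if_splits intro!: exI[of _ "Suc _"])
  moreover have "sparse e" by (auto simp: sparse_def sd e_def)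
  moreover have "fset (the (e n)) \<noteq> {}" if "n \<in> sdom e" for n using that sd by (auto simp: e_def fset_def)
  ultimately show ?thesis using P(2) ss unfolding Good_def in_S_A_def almost_sub_def by blast
qed


lemma Good_inS: "Good lam k A e \<Longrightarrow> in_S e"
  and Good_sparse: "Good lam k A e \<Longrightarrow> sparse e"
  and Good_almost: "Good lam k A e \<Longrightarrow> strict_lt lam i k \<Longrightarrow> finite (sset e - A i)"
  and Good_ne: "Good lam k A e \<Longrightarrow> n \<in> sdom e \<Longrightarrow> fset (the (e n)) \<noteq> {}"
  by (auto simp: Good_def in_S_A_def almost_sub_def)

lemma le_star_dom: "le_star e f \<Longrightarrow> finite (sdom f - sdom e)"
proof -
  assume "le_star e f"
  then obtain N where N: "\<forall>n\<ge>N. n \<in> sdom f \<longrightarrow> n \<in> sdom e" unfolding le_star_def by blast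
  have "sdom f - sdom e \<subseteq> {..<N}" using N by (auto simp: not_less[symmetric])
  then show ?thesis using finite_subset by blast
qed

lemma bound:
  fixes g :: "'l \<Rightarrow> seqS" and K :: "'l set"
  assumes K: "|K| <o lam" "K \<noteq> {}" and G: "\<forall>\<beta>\<in>K. Good lam k A (g \<beta>)"
    and C: "\<forall>\<beta>\<in>K. \<forall>\<beta>'\<in>K. (\<beta>,\<beta>') \<in> lam \<longrightarrow> le_star (g \<beta>) (g \<beta>')"
  shows "\<exists>\<nu>. Good lam k A \<nu> \<and> (\<forall>\<beta>\<in>K. le_star (g \<beta>) \<nu>)"
proof -
  have inS: "in_S (g \<beta>)" if "\<beta> \<in> K" for \<beta> using G that Good_inS by blast
  have spa: "sparse (g \<beta>)" if "\<beta> \<in> K" for \<beta> using G that Good_sparse by blast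
  have "\<exists>D::nat set. infinite D \<and> (\<forall>\<beta>\<in>K. finite (D - sdom (g \<beta>)))"
  proof (rule t_transfer[OF p_lt_t])
    show "K \<subseteq> Field lam" using Fld by simp
    show "K \<noteq> {}" using K(2) .
    show "\<forall>i\<in>K. infinite (sdom (g i))" using inS by (simp add: in_S_def)
    show "\<forall>i\<in>K. \<forall>j\<in>K. (i, j) \<in> lam \<longrightarrow> finite (sdom (g j) - sdom (g i))"
      using C le_star_dom by blast
  qed
  then obtain D :: "nat set" where D: "infinite D" "\<forall>\<beta>\<in>K. finite (D - sdom (g \<beta>))" by blast
  define F where "F = (Wset g D ` K) \<union> ((\<lambda>i. Yset (A i)) ` I)"
  have cardF: "|F| <o lam"
  proof -
    have "|Wset g D ` K| <o lam" using card_of_image ordLeq_ordLess_trans K(1) by blast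
    moreover have "|(\<lambda>i. Yset (A i)) ` I| <o lam" using card_of_image ordLeq_ordLess_trans card_under by blast
    ultimately show ?thesis unfolding F_def
      using card_of_Un_ordLess_infinite_Field[OF _ Co] Fld infUNIV by simp
  qed
  have core: "infinite ((\<Inter>\<beta>\<in>K1. Wset g D \<beta>) \<inter> (\<Inter>i\<in>I0. Yset (A i)))"
    if K1: "finite K1" "K1 \<noteq> {}" "K1 \<subseteq> K" and I0: "finite I0" "I0 \<subseteq> I" for K1 I0
  proof -
    obtain \<gamma> where \<gamma>: "\<gamma> \<in> K1" "\<forall>\<beta>\<in>K1. (\<beta>, \<gamma>) \<in> lam" using finite_max[OF K1(1,2)] by blast
    have \<gamma>K: "\<gamma> \<in> K" using \<gamma>(1) K1(3) by blast
    have ev1: "eventually (\<lambda>x. x \<in> sdom (g \<gamma>) \<longrightarrow> x \<in> sdom (g \<beta>) \<and> the (g \<beta> x) \<subseteq>\<^sub>m the (g \<gamma> x)) sequentially"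
      if "\<beta> \<in> K1" for \<beta>
    proof -
      have "le_star (g \<beta>) (g \<gamma>)" using C \<gamma> that K1(3) \<gamma>K by blast
      then obtain N where N: "\<forall>n\<ge>N. n \<in> sdom (g \<gamma>) \<longrightarrow> n \<in> sdom (g \<beta>) \<and> the (g \<beta> n) \<subseteq>\<^sub>m the (g \<gamma> n)"
        unfolding le_star_def by blast
      show ?thesis unfolding eventually_sequentially by (rule exI[of _ N]) (use N in blast)
    qed
    have ev2: "eventually (\<lambda>x. x \<in> sdom (g \<gamma>) \<longrightarrow> fset (the (g \<gamma> x)) \<subseteq> A i) sequentially"
      if "i \<in> I0" for i
    proof -
      have "finite (sset (g \<gamma>) - A i)" using Good_almost G \<gamma>K that I0(2) by blast
      from sset_threshold[OF inS[OF \<gamma>K] this] obtain N where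
        N: "\<forall>x\<in>sdom (g \<gamma>). x \<ge> N \<longrightarrow> fset (the (g \<gamma> x)) \<subseteq> A i" by blast
      show ?thesis unfolding eventually_sequentially by (rule exI[of _ N]) (use N in blast)
    qed
    have "eventually (\<lambda>x. (\<forall>\<beta>\<in>K1. x \<in> sdom (g \<gamma>) \<longrightarrow> x \<in> sdom (g \<beta>) \<and> the (g \<beta> x) \<subseteq>\<^sub>m the (g \<gamma> x))
        \<and> (\<forall>i\<in>I0. x \<in> sdom (g \<gamma>) \<longrightarrow> fset (the (g \<gamma> x)) \<subseteq> A i)) sequentially"
    proof (rule eventually_conj)
      show "eventually (\<lambda>x. \<forall>\<beta>\<in>K1. x \<in> sdom (g \<gamma>) \<longrightarrow> x \<in> sdom (g \<beta>) \<and> the (g \<beta> x) \<subseteq>\<^sub>m the (g \<gamma> x)) sequentially"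
        by (rule eventually_ball_finite[OF K1(1)]) (use ev1 in blast)
      show "eventually (\<lambda>x. \<forall>i\<in>I0. x \<in> sdom (g \<gamma>) \<longrightarrow> fset (the (g \<gamma> x)) \<subseteq> A i) sequentially"
        by (rule eventually_ball_finite[OF I0(1)]) (use ev2 in blast)
    qed
    then have Q: "\<exists>N. \<forall>x\<ge>N. (\<forall>\<beta>\<in>K1. x \<in> sdom (g \<gamma>) \<longrightarrow> x \<in> sdom (g \<beta>) \<and> the (g \<beta> x) \<subseteq>\<^sub>m the (g \<gamma> x))
        \<and> (\<forall>i\<in>I0. x \<in> sdom (g \<gamma>) \<longrightarrow> fset (the (g \<gamma> x)) \<subseteq> A i)"
      unfolding eventually_sequentially .
    note ci = core_infinite[OF inS[OF \<gamma>K] spa[OF \<gamma>K] D(1) D(2)[rule_format, OF \<gamma>K] Q]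
    show ?thesis
    proof (rule infinite_super[OF _ ci], rule subsetI)
      fix p assume p: "p \<in> {(x, bs). x \<in> D \<and> length bs = nxt D x - x \<and> x \<in> sdom (g \<gamma>) \<and>
            the (g \<gamma> x) \<subseteq>\<^sub>m blk x bs \<and> fset (blk x bs) = fset (the (g \<gamma> x)) \<and>
            (\<forall>\<beta>\<in>K1. x \<in> sdom (g \<gamma>) \<longrightarrow> x \<in> sdom (g \<beta>) \<and> the (g \<beta> x) \<subseteq>\<^sub>m the (g \<gamma> x)) \<and>
            (\<forall>i\<in>I0. x \<in> sdom (g \<gamma>) \<longrightarrow> fset (the (g \<gamma> x)) \<subseteq> A i)}"
      obtain x bs where xb: "p = (x, bs)" by (cases p)
      have h: "x \<in> D" "length bs = nxt D x - x" "x \<in> sdom (g \<gamma>)" "the (g \<gamma> x) \<subseteq>\<^sub>m blk x bs"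
        "fset (blk x bs) = fset (the (g \<gamma> x))"
        "\<forall>\<beta>\<in>K1. x \<in> sdom (g \<beta>) \<and> the (g \<beta> x) \<subseteq>\<^sub>m the (g \<gamma> x)"
        "\<forall>i\<in>I0. fset (the (g \<gamma> x)) \<subseteq> A i"
        using p unfolding xb by (simp_all only: mem_Collect_eq case_prod_conv) blast+
      have "p \<in> Wset g D \<beta>" if "\<beta> \<in> K1" for \<beta>
      proof -
        have a: "x \<in> sdom (g \<beta>)" "the (g \<beta> x) \<subseteq>\<^sub>m the (g \<gamma> x)" using h(6) that by auto
        have "the (g \<beta> x) \<subseteq>\<^sub>m blk x bs" by (rule map_le_trans[OF a(2) h(4)])
        then show ?thesis unfolding xb Wset_def using h(1,2) a(1) by simp
      qed
      moreover have "p \<in> Yset (A i)" if "i \<in> I0" for i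
        using h(5,7) that unfolding xb Yset_def by simp
      ultimately show "p \<in> (\<Inter>\<beta>\<in>K1. Wset g D \<beta>) \<inter> (\<Inter>i\<in>I0. Yset (A i))" by blast
    qed
  qed
  obtain \<beta>0 where \<beta>0: "\<beta>0 \<in> K" using K(2) by blast
  have sfip: "\<forall>G. finite G \<and> G \<noteq> {} \<and> G \<subseteq> F \<longrightarrow> infinite (\<Inter>G)"
  proof (intro allI impI)
    fix G assume G: "finite G \<and> G \<noteq> {} \<and> G \<subseteq> F"
    have "finite (G \<inter> Wset g D ` K)" "G \<inter> Wset g D ` K \<subseteq> Wset g D ` K" using G by auto
    then obtain K0 where K0: "K0 \<subseteq> K" "finite K0" "G \<inter> Wset g D ` K = Wset g D ` K0"
      using finite_subset_image by metis
    have "finite (G \<inter> (\<lambda>i. Yset (A i)) ` I)" "G \<inter> (\<lambda>i. Yset (A i)) ` I \<subseteq> (\<lambda>i. Yset (A i)) ` I" using G by auto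
    then obtain I0 where I0: "I0 \<subseteq> I" "finite I0" "G \<inter> (\<lambda>i. Yset (A i)) ` I = (\<lambda>i. Yset (A i)) ` I0"
      using finite_subset_image by metis
    have sub: "(\<Inter>\<beta>\<in>insert \<beta>0 K0. Wset g D \<beta>) \<inter> (\<Inter>i\<in>I0. Yset (A i)) \<subseteq> \<Inter>G"
    proof
      fix z assume z: "z \<in> (\<Inter>\<beta>\<in>insert \<beta>0 K0. Wset g D \<beta>) \<inter> (\<Inter>i\<in>I0. Yset (A i))"
      show "z \<in> \<Inter>G"
      proof
        fix S assume S: "S \<in> G"
        then have "S \<in> F" using G by blast
        then consider "S \<in> Wset g D ` K" | "S \<in> (\<lambda>i. Yset (A i)) ` I" unfolding F_def by blast
        then show "z \<in> S"
        proof cases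
          case 1
          then have "S \<in> Wset g D ` K0" using K0(3) S by blast
          then show ?thesis using z by blast
        next
          case 2
          then have "S \<in> (\<lambda>i. Yset (A i)) ` I0" using I0(3) S by blast
          then show ?thesis using z by blast
        qed
      qed
    qed
    have "infinite ((\<Inter>\<beta>\<in>insert \<beta>0 K0. Wset g D \<beta>) \<inter> (\<Inter>i\<in>I0. Yset (A i)))"
      using core[of "insert \<beta>0 K0" I0] K0 I0 \<beta>0 by blast
    then show "infinite (\<Inter>G)" using infinite_super[OF sub] by blast
  qed
  have infF: "\<forall>S\<in>F. infinite S"
  proof
    fix S assume "S \<in> F"
    then show "infinite S" using sfip[rule_format, of "{S}"] by simp
  qed
  have Fne: "F \<noteq> {}" using \<beta>0 unfolding F_def by blast
  obtain Z :: "(nat \<times> bool list) set" where Z: "infinite Z" "\<forall>S\<in>F. finite (Z - S)"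
    using p_transfer[OF lam_p cardF infF sfip Fne] by blast
  have ZW: "finite (Z - Wset g D \<beta>)" if "\<beta> \<in> K" for \<beta> using Z(2) that unfolding F_def by blast
  have ZY: "finite (Z - Yset (A i))" if "i \<in> I" for i using Z(2) that unfolding F_def by blast
  interpret M: mk Z g D \<beta>0 using Z(1) D(1) ZW[OF \<beta>0] by unfold_locales
  have "Good lam k A M.\<nu>"
    unfolding Good_def in_S_A_def almost_sub_def
    using M.nu_in_S M.nu_sparse M.nu_Y[OF ZY] M.nu_nonempty G \<beta>0 Good_ne by blast
  moreover have "\<forall>\<beta>\<in>K. le_star (g \<beta>) M.\<nu>" using M.nu_le_star ZW by blast
  ultimately show ?thesis by blast
qed

end

definition SC :: "'l rel \<Rightarrow> 'l \<Rightarrow> ('l \<Rightarrow> nat set) \<Rightarrow> ('l \<Rightarrow> nat set) \<Rightarrow> ('l \<times> 'l \<Rightarrow> 'l) \<Rightarrow> 'l \<Rightarrow> seqS \<Rightarrow> bool" where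
  "SC lam k A B pr \<gamma> e \<longleftrightarrow> (\<exists>N. \<forall>n\<in>sdom e. n \<ge> N \<longrightarrow> fset (the (e n)) \<inter> B \<gamma> \<noteq> {}) \<and>
     (\<forall>\<beta>1 \<beta>2 X Y. pr (\<beta>1, \<beta>2) = \<gamma> \<longrightarrow> X \<in> choices lam k A B \<beta>1 \<longrightarrow> Y \<in> choices lam k A B \<beta>2 \<longrightarrow>
        (\<forall>n\<in>sdom e. fset (the (e n)) \<inter> X \<noteq> {} \<and> fset (the (e n)) \<inter> Y \<noteq> {}) \<and>
        (\<forall>n\<in>sdom e. \<forall>m\<in>sdom e.
           (Min (fset (the (e n)) \<inter> X) < Min (fset (the (e n)) \<inter> Y)) \<longleftrightarrow>
           (Min (fset (the (e m)) \<inter> X) < Min (fset (the (e m)) \<inter> Y))))"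

lemma SC_subseq:
  assumes "SC lam k A B pr \<gamma> e" "subseq e' e"
  shows "SC lam k A B pr \<gamma> e'"
proof -
  note sf = subseq_facts[OF assms(2)]
  have eq: "fset (the (e' n)) = fset (the (e n))" if "n \<in> sdom e'" for n using sf(2)[OF that] by simp
  have sc1: "\<exists>N. \<forall>n\<in>sdom e. n \<ge> N \<longrightarrow> fset (the (e n)) \<inter> B \<gamma> \<noteq> {}"
    using assms(1) unfolding SC_def by (rule conjunct1)
  have sc2: "\<forall>\<beta>1 \<beta>2 X Y. pr (\<beta>1, \<beta>2) = \<gamma> \<longrightarrow> X \<in> choices lam k A B \<beta>1 \<longrightarrow> Y \<in> choices lam k A B \<beta>2 \<longrightarrow>
        (\<forall>n\<in>sdom e. fset (the (e n)) \<inter> X \<noteq> {} \<and> fset (the (e n)) \<inter> Y \<noteq> {}) \<and>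
        (\<forall>n\<in>sdom e. \<forall>m\<in>sdom e.
           (Min (fset (the (e n)) \<inter> X) < Min (fset (the (e n)) \<inter> Y)) \<longleftrightarrow>
           (Min (fset (the (e m)) \<inter> X) < Min (fset (the (e m)) \<inter> Y)))"
    using assms(1) unfolding SC_def by (rule conjunct2)
  obtain N where N: "\<forall>n\<in>sdom e. n \<ge> N \<longrightarrow> fset (the (e n)) \<inter> B \<gamma> \<noteq> {}"
    using sc1 by (elim exE)
  have c: "\<forall>n\<in>sdom e'. n \<ge> N \<longrightarrow> fset (the (e' n)) \<inter> B \<gamma> \<noteq> {}"
  proof (intro ballI impI)
    fix n assume n: "n \<in> sdom e'" "n \<ge> N"
    then have "n \<in> sdom e" using sf(1) by blast
    then show "fset (the (e' n)) \<inter> B \<gamma> \<noteq> {}" using N n eq by simp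
  qed
  have d: "(\<forall>n\<in>sdom e'. fset (the (e' n)) \<inter> X \<noteq> {} \<and> fset (the (e' n)) \<inter> Y \<noteq> {}) \<and>
        (\<forall>n\<in>sdom e'. \<forall>m\<in>sdom e'.
           (Min (fset (the (e' n)) \<inter> X) < Min (fset (the (e' n)) \<inter> Y)) \<longleftrightarrow>
           (Min (fset (the (e' m)) \<inter> X) < Min (fset (the (e' m)) \<inter> Y)))"
    if "pr (\<beta>1, \<beta>2) = \<gamma>" "X \<in> choices lam k A B \<beta>1" "Y \<in> choices lam k A B \<beta>2" for \<beta>1 \<beta>2 X Y
  proof -
    have h: "(\<forall>n\<in>sdom e. fset (the (e n)) \<inter> X \<noteq> {} \<and> fset (the (e n)) \<inter> Y \<noteq> {}) \<and>
        (\<forall>n\<in>sdom e. \<forall>m\<in>sdom e.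
           (Min (fset (the (e n)) \<inter> X) < Min (fset (the (e n)) \<inter> Y)) \<longleftrightarrow>
           (Min (fset (the (e m)) \<inter> X) < Min (fset (the (e m)) \<inter> Y)))"
      using mp[OF mp[OF mp[OF sc2[THEN spec, THEN spec, THEN spec, THEN spec] that(1)] that(2)] that(3)] .
    show ?thesis
    proof (intro conjI ballI)
      fix n assume n: "n \<in> sdom e'"
      then have "n \<in> sdom e" using sf(1) by blast
      then have "fset (the (e n)) \<inter> X \<noteq> {} \<and> fset (the (e n)) \<inter> Y \<noteq> {}"
        by (rule bspec[OF conjunct1[OF h]])
      then show "fset (the (e' n)) \<inter> X \<noteq> {}" "fset (the (e' n)) \<inter> Y \<noteq> {}" unfolding eq[OF n] by simp_all
    next
      fix n m assume n: "n \<in> sdom e'" and m: "m \<in> sdom e'"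
      then have nm: "n \<in> sdom e" "m \<in> sdom e" using sf(1) by blast+
      have "(Min (fset (the (e n)) \<inter> X) < Min (fset (the (e n)) \<inter> Y)) \<longleftrightarrow>
           (Min (fset (the (e m)) \<inter> X) < Min (fset (the (e m)) \<inter> Y))"
        using bspec[OF bspec[OF conjunct2[OF h] nm(1)] nm(2)] .
      then show "(Min (fset (the (e' n)) \<inter> X) < Min (fset (the (e' n)) \<inter> Y)) \<longleftrightarrow>
           (Min (fset (the (e' m)) \<inter> X) < Min (fset (the (e' m)) \<inter> Y))" unfolding eq[OF n] eq[OF m] .
    qed
  qed
  show ?thesis unfolding SC_def
  proof (intro conjI allI impI)
    show "\<exists>N. \<forall>n\<in>sdom e'. N \<le> n \<longrightarrow> fset (the (e' n)) \<inter> B \<gamma> \<noteq> {}" using c by (intro exI[of _ N]) simp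
  next
    fix \<beta>1 \<beta>2 X Y assume "pr (\<beta>1, \<beta>2) = \<gamma>" "X \<in> choices lam k A B \<beta>1" "Y \<in> choices lam k A B \<beta>2"
    note dd = d[OF this]
    show "\<forall>n\<in>sdom e'. fset (the (e' n)) \<inter> X \<noteq> {} \<and> fset (the (e' n)) \<inter> Y \<noteq> {}" using dd by (rule conjunct1)
    show "\<forall>n\<in>sdom e'. \<forall>m\<in>sdom e'. (Min (fset (the (e' n)) \<inter> X) < Min (fset (the (e' n)) \<inter> Y)) =
           (Min (fset (the (e' m)) \<inter> X) < Min (fset (the (e' m)) \<inter> Y))" using dd by (rule conjunct2)
  qed
qed

locale main2 = main lam B A k for lam :: "'l rel" and B A k +
  fixes pr :: "'l \<times> 'l \<Rightarrow> 'l"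
  assumes pr_bij: "bij pr"
begin

lemma extend:
  assumes u: "Good lam k A u"
  shows "\<exists>e. Good lam k A e \<and> le_star u e \<and> SC lam k A B pr \<gamma> e"
proof -
  have "\<gamma> \<in> range pr" using bij_is_surj[OF pr_bij] by simp
  then obtain q where "\<gamma> = pr q" by blast
  then obtain \<beta>1 \<beta>2 where pr12: "pr (\<beta>1, \<beta>2) = \<gamma>" by (cases q) simp
  have prinj: "b1 = \<beta>1 \<and> b2 = \<beta>2" if "pr (b1, b2) = \<gamma>" for b1 b2
  proof -
    have "(b1, b2) = (\<beta>1, \<beta>2)" by (rule injD[OF bij_is_inj[OF pr_bij]]) (simp add: that pr12)
    then show ?thesis by simp
  qed
  have clos: "\<forall>X\<in>range B. \<forall>Y\<in>range B. X \<inter> Y \<in> range B" using exB unfolding exemplifies_p_def by blast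
  obtain \<delta>1 where d1: "B \<delta>1 = B \<beta>1 \<inter> B \<beta>2" using clos by (metis rangeE rangeI)
  obtain \<delta> where d: "B \<delta> = B \<gamma> \<inter> B \<delta>1" using clos by (metis rangeE rangeI)
  have "\<exists>P::nat set. infinite P \<and> (\<forall>i\<in>I. finite (P - (A i \<inter> B \<delta>)))"
  proof (rule A_tower)
    show "\<forall>i\<in>I. infinite (A i \<inter> B \<delta>)" using A_B by blast
    show "\<forall>i j. strict_lt lam i j \<and> strict_lt lam j k \<longrightarrow> finite (A j \<inter> B \<delta> - A i \<inter> B \<delta>)"
    proof (intro allI impI)
      fix i j assume "strict_lt lam i j \<and> strict_lt lam j k"
      then have "finite (A j - A i)" using A_dec unfolding almost_sub_def by blast
      moreover have "A j \<inter> B \<delta> - A i \<inter> B \<delta> \<subseteq> A j - A i" by blast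
      ultimately show "finite (A j \<inter> B \<delta> - A i \<inter> B \<delta>)" using finite_subset by blast
    qed
  qed
  then obtain P :: "nat set" where P: "infinite P" "\<forall>i\<in>I. finite (P - (A i \<inter> B \<delta>))" by blast
  define P' where "P' = P \<inter> B \<delta>"
  obtain i0 where i0: "i0 \<in> I" using I_ne by blast
  have P'inf: "infinite P'"
  proof
    assume "finite P'"
    moreover have "P \<subseteq> P' \<union> (P - (A i0 \<inter> B \<delta>))" unfolding P'_def by blast
    ultimately show False using P i0 by (meson finite_UnI finite_subset)
  qed
  have P'A: "finite (P' - A i)" if "i \<in> I" for i
  proof -
    have "P' - A i \<subseteq> P - (A i \<inter> B \<delta>)" unfolding P'_def by blast
    then show ?thesis using P(2) that finite_subset by blast
  qed
  have P'B: "P' \<subseteq> B \<gamma>" "P' \<subseteq> B \<beta>1" "P' \<subseteq> B \<beta>2" unfolding P'_def using d d1 by auto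
  define E where "E = (if strict_lt lam \<beta>1 k then P' - A \<beta>1 else {}) \<union> (if strict_lt lam \<beta>2 k then P' - A \<beta>2 else {})"
  have finE: "finite E" unfolding E_def using P'A by simp
  define M where "M = Suc (Max (insert 0 E))"
  have PM: "(strict_lt lam \<beta>1 k \<longrightarrow> q \<in> A \<beta>1) \<and> (strict_lt lam \<beta>2 k \<longrightarrow> q \<in> A \<beta>2)"
    if "q \<in> P'" "q \<ge> M" for q
  proof (rule ccontr)
    assume "\<not> ?thesis"
    then have "q \<in> E" using that unfolding E_def by auto
    then have "q \<le> Max (insert 0 E)" using finE by simp
    then show False using that(2) unfolding M_def by simp
  qed
  have uS: "in_S u" using u Good_inS by blast
  define p where "p x = (LEAST q. q \<in> P' \<and> (\<forall>l\<in>dom (the (u x)). l < q))" for x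
  have pP: "p x \<in> P' \<and> (\<forall>l\<in>dom (the (u x)). l < p x)" if x: "x \<in> sdom u" for x
  proof -
    have "finite (dom (the (u x)))" using in_S_block_facts[OF uS x] by simp
    then obtain Mx where Mx: "\<forall>l\<in>dom (the (u x)). l < Mx" by (metis finite_nat_set_iff_bounded)
    obtain q where q: "q \<in> P'" "Mx < q" using P'inf infinite_nat_iff_unbounded by blast
    have "\<exists>q. q \<in> P' \<and> (\<forall>l\<in>dom (the (u x)). l < q)" using q Mx by (meson order.strict_trans)
    then show ?thesis unfolding p_def by (rule LeastI_ex)
  qed
  have px: "x < p x" if x: "x \<in> sdom u" for x
    using pP[OF x] in_S_block_facts(1)[OF uS x] by blast
  define ext where "ext x = (\<lambda>l. if l \<in> dom (the (u x)) then the (u x) l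
      else if x \<le> l \<and> l \<le> p x then Some (l = p x) else None)" for x
  have e1: "dom (ext x) = {x..<Suc (p x)}" if x: "x \<in> sdom u" for x
  proof -
    obtain kx where kx: "kx > x" "dom (the (u x)) = {x..<kx}" using in_S_block[OF uS x] by blast
    have "kx - 1 \<in> dom (the (u x))" using kx by auto
    then have "kx - 1 < p x" using pP[OF x] by blast
    then have "kx \<le> Suc (p x)" by arith
    then show ?thesis using kx by (auto simp: ext_def dom_def split: if_splits)
  qed
  have e2: "fset (ext x) = fset (the (u x)) \<union> {p x}" if x: "x \<in> sdom u" for x
  proof -
    have "p x \<notin> dom (the (u x))" using pP[OF x] by blast
    moreover have "\<forall>l\<in>dom (the (u x)). x \<le> l" using in_S_block_facts(4)[OF uS x] .
    ultimately show ?thesis using px[OF x] fset_def[of "ext x"] fset_def[of "the (u x)"]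
      by (auto simp: ext_def split: if_splits)
  qed
  have e3: "the (u x) \<subseteq>\<^sub>m ext x" for x by (auto simp: map_le_def ext_def)
  define D'' where "D'' = {x \<in> sdom u. M \<le> x}"
  have D''inf: "infinite D''"
  proof
    assume "finite D''"
    moreover have "sdom u \<subseteq> D'' \<union> {..<M}" unfolding D''_def by auto
    ultimately show False using uS unfolding in_S_def by (meson finite_UnI finite_lessThan finite_subset)
  qed
  define cmp where "cmp x X Y = (Min (fset (ext x) \<inter> X) < Min (fset (ext x) \<inter> Y))" for x X Y
  define sig where "sig x = (cmp x (B \<beta>1) (B \<beta>2), cmp x (B \<beta>1) (A \<beta>2), cmp x (A \<beta>1) (B \<beta>2), cmp x (A \<beta>1) (A \<beta>2))" for x
  have "finite (sig ` D'')" by simp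
  then obtain x0 where x0: "x0 \<in> D''" "infinite {x \<in> D''. sig x = sig x0}"
    using pigeonhole_infinite[OF D''inf] by blast
  define D' where "D' = {x \<in> D''. sig x = sig x0}"
  define e :: seqS where "e x = (if x \<in> D' then Some (ext x) else None)" for x
  have sd: "sdom e = D'" by (auto simp: sdom_def e_def)
  have D'u: "x \<in> sdom u" "M \<le> x" if "x \<in> D'" for x using that unfolding D'_def D''_def by auto
  have the_e: "the (e x) = ext x" if "x \<in> D'" for x using that by (simp add: e_def)
  have eS: "in_S e"
    unfolding in_S_def
  proof (intro conjI allI impI)
    show "infinite (sdom e)" using x0(2) sd D'_def by simp
    fix n \<eta> assume "e n = Some \<eta>"
    then have n: "n \<in> D'" "\<eta> = ext n" by (auto simp: e_def split: if_splits)
    then show "\<exists>k>n. dom \<eta> = {n..<k}" using e1[OF D'u(1)[OF n(1)]] px[OF D'u(1)[OF n(1)]]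
      by (intro exI[of _ "Suc (p n)"]) auto
  qed
  have sset_e: "sset e \<subseteq> sset u \<union> P'"
  proof
    fix l assume "l \<in> sset e"
    then obtain x where x: "x \<in> D'" "l \<in> fset (ext x)" unfolding sset_def sd using the_e by auto
    then have "l \<in> fset (the (u x)) \<or> l = p x" using e2[OF D'u(1)[OF x(1)]] by auto
    then show "l \<in> sset u \<union> P'" using pP[OF D'u(1)[OF x(1)]] D'u(1)[OF x(1)] unfolding sset_def by blast
  qed
  have eA: "in_S_A lam k A e"
    unfolding in_S_A_def almost_sub_def
  proof (intro conjI allI impI ballI)
    show "in_S e" using eS .
    fix i assume i: "strict_lt lam i k"
    have "sset e - A i \<subseteq> (sset u - A i) \<union> (P' - A i)" using sset_e by blast
    moreover have "finite (sset u - A i)" using u i Good_almost by blast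
    ultimately show "finite (sset e - A i)" using P'A i by (meson finite_UnI finite_subset mem_Collect_eq)
  next
    fix n assume "n \<in> sdom e"
    then have n: "n \<in> D'" using sd by simp
    show "fset (the (e n)) \<noteq> {}" using e2[OF D'u(1)[OF n]] the_e[OF n] by simp
  qed
  have le: "le_star u e" unfolding le_star_def
  proof (rule exI[of _ 0], intro allI impI)
    fix n assume "n \<in> sdom e"
    then have n: "n \<in> D'" using sd by simp
    show "n \<in> sdom u \<and> the (u n) \<subseteq>\<^sub>m the (e n)" using D'u(1)[OF n] the_e[OF n] e3[of n] by simp
  qed
  have pn: "p n \<in> fset (the (e n))" "p n \<in> P'" "M \<le> p n" if n: "n \<in> D'" for n
    using e2[OF D'u(1)[OF n]] the_e[OF n] pP[OF D'u(1)[OF n]] D'u(2)[OF n] px[OF D'u(1)[OF n]] by auto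
  have sc: "SC lam k A B pr \<gamma> e"
    unfolding SC_def
  proof (intro conjI allI impI)
    show "\<exists>N. \<forall>n\<in>sdom e. N \<le> n \<longrightarrow> fset (the (e n)) \<inter> B \<gamma> \<noteq> {}"
      using pn P'B sd by blast
  next
    fix b1 b2 X Y assume pr: "pr (b1, b2) = \<gamma>" and X: "X \<in> choices lam k A B b1" and Y: "Y \<in> choices lam k A B b2"
    have bb: "b1 = \<beta>1" "b2 = \<beta>2" using prinj[OF pr] by auto
    have Xc: "X = B \<beta>1 \<or> (strict_lt lam \<beta>1 k \<and> X = A \<beta>1)" using X bb by (auto simp: choices_def split: if_splits)
    have Yc: "Y = B \<beta>2 \<or> (strict_lt lam \<beta>2 k \<and> Y = A \<beta>2)" using Y bb by (auto simp: choices_def split: if_splits)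
    show "\<forall>n\<in>sdom e. fset (the (e n)) \<inter> X \<noteq> {} \<and> fset (the (e n)) \<inter> Y \<noteq> {}"
    proof
      fix n assume "n \<in> sdom e"
      then have n: "n \<in> D'" using sd by simp
      have "p n \<in> X" using Xc
      proof (elim disjE conjE)
        assume "X = B \<beta>1" then show ?thesis using pn(2)[OF n] P'B(2) by blast
      next
        assume "strict_lt lam \<beta>1 k" "X = A \<beta>1" then show ?thesis using PM[OF pn(2,3)[OF n]] by blast
      qed
      moreover have "p n \<in> Y" using Yc
      proof (elim disjE conjE)
        assume "Y = B \<beta>2" then show ?thesis using pn(2)[OF n] P'B(3) by blast
      next
        assume "strict_lt lam \<beta>2 k" "Y = A \<beta>2" then show ?thesis using PM[OF pn(2,3)[OF n]] by blast
      qed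
      ultimately show "fset (the (e n)) \<inter> X \<noteq> {} \<and> fset (the (e n)) \<inter> Y \<noteq> {}" using pn[OF n] by blast
    qed
    show "\<forall>n\<in>sdom e. \<forall>m\<in>sdom e. (Min (fset (the (e n)) \<inter> X) < Min (fset (the (e n)) \<inter> Y)) \<longleftrightarrow>
           (Min (fset (the (e m)) \<inter> X) < Min (fset (the (e m)) \<inter> Y))"
    proof (intro ballI)
      fix n m assume "n \<in> sdom e" "m \<in> sdom e"
      then have n: "n \<in> D'" and m: "m \<in> D'" using sd by auto
      have ss: "sig n = sig m" using n m unfolding D'_def by simp
      have "cmp n X Y = cmp m X Y"
        using Xc Yc
      proof (elim disjE conjE)
        assume "X = B \<beta>1" "Y = B \<beta>2" then show ?thesis using ss unfolding sig_def by simp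
      next
        assume "X = B \<beta>1" "Y = A \<beta>2" then show ?thesis using ss unfolding sig_def by simp
      next
        assume "X = A \<beta>1" "Y = B \<beta>2" then show ?thesis using ss unfolding sig_def by simp
      next
        assume "X = A \<beta>1" "Y = A \<beta>2" then show ?thesis using ss unfolding sig_def by simp
      qed
      then show "(Min (fset (the (e n)) \<inter> X) < Min (fset (the (e n)) \<inter> Y)) \<longleftrightarrow>
           (Min (fset (the (e m)) \<inter> X) < Min (fset (the (e m)) \<inter> Y))"
        using the_e[OF n] the_e[OF m] unfolding cmp_def by simp
    qed
  qed
  obtain e' where e': "subseq e' e" "infinite (sdom e')" "sparse e'" using sparsify[OF eS] by blast
  have "Good lam k A e'" unfolding Good_def using subseq_in_S_A[OF eA e'(1,2)] e'(3) by blast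
  moreover have "le_star u e'" using subseq_le_star[OF le e'(1)] .
  moreover have "SC lam k A B pr \<gamma> e'" using SC_subseq[OF sc e'(1)] .
  ultimately show ?thesis by blast
qed

end

definition Cond :: "'l rel \<Rightarrow> 'l \<Rightarrow> ('l \<Rightarrow> nat set) \<Rightarrow> ('l \<Rightarrow> nat set) \<Rightarrow> ('l \<times> 'l \<Rightarrow> 'l) \<Rightarrow> ('l \<Rightarrow> seqS) \<Rightarrow> 'l \<Rightarrow> seqS \<Rightarrow> bool" where
  "Cond lam k A B pr g \<alpha> e \<longleftrightarrow> Good lam k A e \<and> (\<forall>\<beta>. strict_lt lam \<beta> \<alpha> \<longrightarrow> le_star (g \<beta>) e) \<and>
     (\<forall>\<gamma>. is_succ lam \<gamma> \<alpha> \<longrightarrow> SC lam k A B pr \<gamma> e)"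

context main2
begin

lemma succ_unique:
  assumes a: "is_succ lam \<gamma> \<alpha>" and b: "is_succ lam \<gamma>' \<alpha>"
  shows "\<gamma> = \<gamma>'"
proof (rule ccontr)
  assume ne: "\<gamma> \<noteq> \<gamma>'"
  have sa: "strict_lt lam \<gamma> \<alpha>" "strict_lt lam \<gamma>' \<alpha>" using a b by (auto simp: is_succ_def)
  have all: "\<forall>c. strict_lt lam \<gamma> c \<longrightarrow> (\<alpha>, c) \<in> lam" "\<forall>c. strict_lt lam \<gamma>' c \<longrightarrow> (\<alpha>, c) \<in> lam"
    using a b by (auto simp: is_succ_def)
  consider "(\<gamma>, \<gamma>') \<in> lam" | "(\<gamma>', \<gamma>) \<in> lam" using total by blast
  then show False
  proof cases
    case 1
    then have "(\<alpha>, \<gamma>') \<in> lam" using all(1) ne by (simp add: strict_lt_def)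
    moreover have "(\<gamma>', \<alpha>) \<in> lam" "\<gamma>' \<noteq> \<alpha>" using sa(2) by (auto simp: strict_lt_def)
    ultimately show False using antisyml by blast
  next
    case 2
    then have "(\<alpha>, \<gamma>) \<in> lam" using all(2) ne by (simp add: strict_lt_def)
    moreover have "(\<gamma>, \<alpha>) \<in> lam" "\<gamma> \<noteq> \<alpha>" using sa(1) by (auto simp: strict_lt_def)
    ultimately show False using antisyml by blast
  qed
qed

lemma step:
  assumes H: "\<forall>\<beta>. strict_lt lam \<beta> \<alpha> \<longrightarrow> Good lam k A (g \<beta>)"
    and Ch: "\<forall>\<beta> \<beta>'. strict_lt lam \<beta> \<alpha> \<longrightarrow> strict_lt lam \<beta>' \<alpha> \<longrightarrow> (\<beta>, \<beta>') \<in> lam \<longrightarrow> le_star (g \<beta>) (g \<beta>')"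
  shows "\<exists>e. Cond lam k A B pr g \<alpha> e"
proof -
  define K where "K = {\<beta>. strict_lt lam \<beta> \<alpha>}"
  have "\<exists>u. Good lam k A u \<and> (\<forall>\<beta>\<in>K. le_star (g \<beta>) u)"
  proof (cases "K = {}")
    case True then show ?thesis using base by blast
  next
    case False
    show ?thesis
    proof (rule bound)
      show "|K| <o lam" unfolding K_def by (rule card_under)
      show "K \<noteq> {}" using False .
      show "\<forall>\<beta>\<in>K. Good lam k A (g \<beta>)" using H unfolding K_def by blast
      show "\<forall>\<beta>\<in>K. \<forall>\<beta>'\<in>K. (\<beta>, \<beta>') \<in> lam \<longrightarrow> le_star (g \<beta>) (g \<beta>')" using Ch unfolding K_def by blast
    qed
  qed
  then obtain u where u: "Good lam k A u" "\<forall>\<beta>\<in>K. le_star (g \<beta>) u" by blast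
  show ?thesis
  proof (cases "\<exists>\<gamma>. is_succ lam \<gamma> \<alpha>")
    case True
    then obtain \<gamma> where \<gamma>: "is_succ lam \<gamma> \<alpha>" by blast
    obtain e where e: "Good lam k A e" "le_star u e" "SC lam k A B pr \<gamma> e" using extend[OF u(1)] by blast
    have "Cond lam k A B pr g \<alpha> e" unfolding Cond_def
    proof (intro conjI allI impI)
      show "Good lam k A e" using e(1) .
      fix \<beta> assume "strict_lt lam \<beta> \<alpha>"
      then have "le_star (g \<beta>) u" using u(2) unfolding K_def by blast
      then show "le_star (g \<beta>) e" using le_star_trans[OF _ e(2)] by blast
    next
      fix \<gamma>' assume "is_succ lam \<gamma>' \<alpha>"
      then have "\<gamma>' = \<gamma>" using succ_unique[OF _ \<gamma>] by blast
      then show "SC lam k A B pr \<gamma>' e" using e(3) by simp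
    qed
    then show ?thesis by blast
  next
    case False
    have "Cond lam k A B pr g \<alpha> u" unfolding Cond_def
    proof (intro conjI allI impI)
      show "Good lam k A u" using u(1) .
      fix \<beta> assume "strict_lt lam \<beta> \<alpha>" then show "le_star (g \<beta>) u" using u(2) unfolding K_def by blast
    next
      fix \<gamma> assume "is_succ lam \<gamma> \<alpha>" then show "SC lam k A B pr \<gamma> u" using False by blast
    qed
    then show ?thesis by blast
  qed
qed

lemma chain_exists: "\<exists>eta. \<forall>\<alpha>. Cond lam k A B pr eta \<alpha> (eta \<alpha>)"
proof -
  define R where "R = lam - Id"
  have wfR: "wf R" unfolding R_def using wo_rel.WF[OF WO] .
  have sR: "strict_lt lam \<beta> \<alpha> \<longleftrightarrow> (\<beta>, \<alpha>) \<in> R" for \<beta> \<alpha> by (auto simp: R_def strict_lt_def)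
  define H where "H = (\<lambda>f \<alpha>. SOME e. Cond lam k A B pr f \<alpha> e)"
  define eta where "eta = wfrec R H"
  have cc: "Cond lam k A B pr (cut eta R \<alpha>) \<alpha> e \<longleftrightarrow> Cond lam k A B pr eta \<alpha> e" for \<alpha> e
  proof -
    have ce: "cut eta R \<alpha> \<beta> = eta \<beta>" if "strict_lt lam \<beta> \<alpha>" for \<beta>
      using that sR[of \<beta> \<alpha>] cut_apply[of \<beta> \<alpha> R eta] by simp
    have "(\<forall>\<beta>. strict_lt lam \<beta> \<alpha> \<longrightarrow> le_star (cut eta R \<alpha> \<beta>) e) \<longleftrightarrow> (\<forall>\<beta>. strict_lt lam \<beta> \<alpha> \<longrightarrow> le_star (eta \<beta>) e)"
      using ce by auto
    then show ?thesis unfolding Cond_def by simp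
  qed
  have "Cond lam k A B pr eta \<alpha> (eta \<alpha>)" for \<alpha>
  proof (induction \<alpha> rule: wf_induct[OF wfR])
    case (1 \<alpha>)
    have "\<exists>e. Cond lam k A B pr eta \<alpha> e"
    proof (rule step)
      show "\<forall>\<beta>. strict_lt lam \<beta> \<alpha> \<longrightarrow> Good lam k A (eta \<beta>)"
      proof (intro allI impI)
        fix \<beta> assume "strict_lt lam \<beta> \<alpha>"
        then have "(\<beta>, \<alpha>) \<in> R" using sR by simp
        then have "Cond lam k A B pr eta \<beta> (eta \<beta>)" using 1 by simp
        then show "Good lam k A (eta \<beta>)" unfolding Cond_def by (rule conjunct1)
      qed
      show "\<forall>\<beta> \<beta>'. strict_lt lam \<beta> \<alpha> \<longrightarrow> strict_lt lam \<beta>' \<alpha> \<longrightarrow> (\<beta>, \<beta>') \<in> lam \<longrightarrow> le_star (eta \<beta>) (eta \<beta>')"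
      proof (intro allI impI)
        fix \<beta> \<beta>' assume b: "strict_lt lam \<beta> \<alpha>" "strict_lt lam \<beta>' \<alpha>" "(\<beta>, \<beta>') \<in> lam"
        show "le_star (eta \<beta>) (eta \<beta>')"
        proof (cases "\<beta> = \<beta>'")
          case True then show ?thesis using le_star_refl by simp
        next
          case False
          then have "strict_lt lam \<beta> \<beta>'" using b(3) by (simp add: strict_lt_def)
          moreover have "(\<beta>', \<alpha>) \<in> R" using b(2) sR by simp
          then have "Cond lam k A B pr eta \<beta>' (eta \<beta>')" using 1 by simp
          ultimately show ?thesis unfolding Cond_def by blast
        qed
      qed
    qed
    then have ex: "\<exists>e. Cond lam k A B pr (cut eta R \<alpha>) \<alpha> e" using cc by blast
    have "eta \<alpha> = H (cut eta R \<alpha>) \<alpha>" unfolding eta_def by (rule wfrec[OF wfR])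
    then have "Cond lam k A B pr (cut eta R \<alpha>) \<alpha> (eta \<alpha>)" unfolding H_def using someI_ex[OF ex] by simp
    then show ?case using cc by blast
  qed
  then show ?thesis by blast
qed

lemma top:
  assumes G: "\<forall>\<alpha>. Good lam k A (g \<alpha>)" and C: "\<forall>\<alpha> \<beta>. (\<alpha>, \<beta>) \<in> lam \<longrightarrow> le_star (g \<alpha>) (g \<beta>)"
  shows "\<exists>\<nu>. in_S \<nu> \<and> (\<forall>\<alpha>. le_star (g \<alpha>) \<nu>)"
proof -
  have inS: "in_S (g \<beta>)" for \<beta> using G Good_inS by blast
  have spa: "sparse (g \<beta>)" for \<beta> using G Good_sparse by blast
  have "\<exists>D::nat set. infinite D \<and> (\<forall>\<beta>\<in>UNIV. finite (D - sdom (g \<beta>)))"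
  proof (rule t_transfer[OF p_lt_t])
    show "UNIV \<subseteq> Field lam" using Fld by simp
    show "(UNIV::'l set) \<noteq> {}" by simp
    show "\<forall>i\<in>UNIV. infinite (sdom (g i))" using inS by (simp add: in_S_def)
    show "\<forall>i\<in>UNIV. \<forall>j\<in>UNIV. (i, j) \<in> lam \<longrightarrow> finite (sdom (g j) - sdom (g i))"
      using C le_star_dom by blast
  qed
  then obtain D :: "nat set" where D: "infinite D" "\<forall>\<beta>. finite (D - sdom (g \<beta>))" by blast
  have "\<exists>Z::(nat \<times> bool list) set. infinite Z \<and> (\<forall>\<beta>\<in>UNIV. finite (Z - Wset g D \<beta>))"
  proof (rule t_transfer[OF p_lt_t])
    show "UNIV \<subseteq> Field lam" using Fld by simp
    show "(UNIV::'l set) \<noteq> {}" by simp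
    show "\<forall>i\<in>UNIV. infinite (Wset g D i)"
    proof
      fix i
      have ci: "infinite {(x, bs). x \<in> D \<and> length bs = nxt D x - x \<and> x \<in> sdom (g i) \<and>
            the (g i x) \<subseteq>\<^sub>m blk x bs \<and> fset (blk x bs) = fset (the (g i x)) \<and> True}"
        by (rule core_infinite[OF inS spa D(1) D(2)[rule_format]]) simp
      show "infinite (Wset g D i)"
        by (rule infinite_super[OF _ ci]) (auto simp: Wset_def)
    qed
    show "\<forall>i\<in>UNIV. \<forall>j\<in>UNIV. (i, j) \<in> lam \<longrightarrow> finite (Wset g D j - Wset g D i)"
    proof (intro ballI impI)
      fix i j assume "(i, j) \<in> lam"
      then have "le_star (g i) (g j)" using C by blast
      then obtain N where N: "\<forall>n\<ge>N. n \<in> sdom (g j) \<longrightarrow> n \<in> sdom (g i) \<and> the (g i n) \<subseteq>\<^sub>m the (g j n)"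
        unfolding le_star_def by blast
      have "Wset g D j - Wset g D i \<subseteq> {(x, bs). x < N \<and> length bs = nxt D x - x}"
      proof
        fix p assume p: "p \<in> Wset g D j - Wset g D i"
        obtain x bs where xb: "p = (x, bs)" by (cases p)
        have h: "x \<in> D" "length bs = nxt D x - x" "x \<in> sdom (g j)" "the (g j x) \<subseteq>\<^sub>m blk x bs"
          using p unfolding xb Wset_def by simp_all
        have "x < N"
        proof (rule ccontr)
          assume "\<not> x < N"
          then have a: "x \<in> sdom (g i)" "the (g i x) \<subseteq>\<^sub>m the (g j x)" using N h(3) by auto
          have "the (g i x) \<subseteq>\<^sub>m blk x bs" by (rule map_le_trans[OF a(2) h(4)])
          then have "p \<in> Wset g D i" unfolding xb Wset_def using h(1,2) a(1) by simp
          then show False using p by blast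
        qed
        then show "p \<in> {(x, bs). x < N \<and> length bs = nxt D x - x}" using h(2) xb by simp
      qed
      from finite_subset[OF this finite_cols[of N "\<lambda>x. nxt D x - x"]]
      show "finite (Wset g D j - Wset g D i)" .
    qed
  qed
  then obtain Z :: "(nat \<times> bool list) set" where Z: "infinite Z" "\<forall>\<beta>. finite (Z - Wset g D \<beta>)" by blast
  interpret M: mk Z g D k using Z(1) D(1) Z(2) by unfold_locales auto
  have "in_S M.\<nu>" by (rule M.nu_in_S)
  moreover have "\<forall>\<alpha>. le_star (g \<alpha>) M.\<nu>" using M.nu_le_star Z(2) by blast
  ultimately show ?thesis by blast
qed

end

theorem lemma2p8:
  fixes lam :: "'l rel" and B A :: "'l \<Rightarrow> nat set" and k :: 'l
    and pr :: "'l \<times> 'l \<Rightarrow> 'l"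
  assumes lam_card: "card_order lam"
    and lam_p: "is_frak_p lam"
    and p_lt_t: "less_frak_t lam"
    and exB: "exemplifies_p lam (range B)"
    and k_lt: "k \<in> Field lam"
    and k_reg: "regular_below lam k"
    and A_inf: "\<forall>i. strict_lt lam i k \<longrightarrow> infinite (A i)"
    and A_dec: "\<forall>i j. strict_lt lam i j \<and> strict_lt lam j k \<longrightarrow> almost_sub (A j) (A i)"
    and A_B: "\<forall>i \<alpha>. strict_lt lam i k \<longrightarrow> infinite (A i \<inter> B \<alpha>)"
    and A_max: "\<forall>P. pseudo_int P (A ` {i. strict_lt lam i k}) \<longrightarrow> (\<exists>\<alpha>. finite (P \<inter> B \<alpha>))"
    and pr_bij: "bij pr"
    and pr_ge: "\<forall>a1 a2. (a1, pr (a1, a2)) \<in> lam \<and> (a2, pr (a1, a2)) \<in> lam"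
  shows "\<exists>(eta :: 'l \<Rightarrow> seqS) (eta_lam :: seqS).
     (\<forall>\<alpha>. in_S_A lam k A (eta \<alpha>)) \<and> in_S eta_lam \<and>
     (\<forall>\<alpha> \<beta>. (\<alpha>, \<beta>) \<in> lam \<longrightarrow> le_star (eta \<alpha>) (eta \<beta>)) \<and>
     (\<forall>\<alpha>. le_star (eta \<alpha>) eta_lam) \<and>
     (\<forall>\<alpha> \<alpha>'. is_succ lam \<alpha> \<alpha>' \<longrightarrow>
        (\<exists>N. \<forall>n\<in>sdom (eta \<alpha>'). n \<ge> N \<longrightarrow> fset (the (eta \<alpha>' n)) \<inter> B \<alpha> \<noteq> {})) \<and>
     (\<forall>\<beta> \<gamma> \<alpha>' X Y. is_succ lam (pr (\<beta>, \<gamma>)) \<alpha>' \<longrightarrow>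
        X \<in> choices lam k A B \<beta> \<longrightarrow> Y \<in> choices lam k A B \<gamma> \<longrightarrow>
        (\<forall>n\<in>sdom (eta \<alpha>'). fset (the (eta \<alpha>' n)) \<inter> X \<noteq> {} \<and> fset (the (eta \<alpha>' n)) \<inter> Y \<noteq> {}) \<and>
        (\<forall>n\<in>sdom (eta \<alpha>'). \<forall>m\<in>sdom (eta \<alpha>').
           (Min (fset (the (eta \<alpha>' n)) \<inter> X) < Min (fset (the (eta \<alpha>' n)) \<inter> Y)) \<longleftrightarrow>
           (Min (fset (the (eta \<alpha>' m)) \<inter> X) < Min (fset (the (eta \<alpha>' m)) \<inter> Y))))"
proof -
  interpret main2 lam B A k pr
    using lam_card lam_p p_lt_t exB k_reg A_inf A_dec A_B pr_bij by unfold_locales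
  obtain eta where eta: "\<forall>\<alpha>. Cond lam k A B pr eta \<alpha> (eta \<alpha>)" using chain_exists by blast
  have G: "\<forall>\<alpha>. Good lam k A (eta \<alpha>)" using eta unfolding Cond_def by blast
  have C: "\<forall>\<alpha> \<beta>. (\<alpha>, \<beta>) \<in> lam \<longrightarrow> le_star (eta \<alpha>) (eta \<beta>)"
  proof (intro allI impI)
    fix \<alpha> \<beta> assume ab: "(\<alpha>, \<beta>) \<in> lam"
    show "le_star (eta \<alpha>) (eta \<beta>)"
    proof (cases "\<alpha> = \<beta>")
      case True then show ?thesis using le_star_refl by simp
    next
      case False
      then have "strict_lt lam \<alpha> \<beta>" using ab by (simp add: strict_lt_def)
      moreover have "Cond lam k A B pr eta \<beta> (eta \<beta>)" using eta by blast
      ultimately show ?thesis unfolding Cond_def by blast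
    qed
  qed
  obtain \<nu> where \<nu>: "in_S \<nu>" "\<forall>\<alpha>. le_star (eta \<alpha>) \<nu>" using top[OF G C] by blast
  have SCs: "SC lam k A B pr \<gamma> (eta \<alpha>')" if "is_succ lam \<gamma> \<alpha>'" for \<gamma> \<alpha>'
  proof -
    have "Cond lam k A B pr eta \<alpha>' (eta \<alpha>')" using eta by blast
    then show ?thesis using that unfolding Cond_def by blast
  qed
  have c: "\<forall>\<alpha> \<alpha>'. is_succ lam \<alpha> \<alpha>' \<longrightarrow>
        (\<exists>N. \<forall>n\<in>sdom (eta \<alpha>'). n \<ge> N \<longrightarrow> fset (the (eta \<alpha>' n)) \<inter> B \<alpha> \<noteq> {})"
  proof (intro allI impI)
    fix \<alpha> \<alpha>' assume "is_succ lam \<alpha> \<alpha>'"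
    from SCs[OF this] show "\<exists>N. \<forall>n\<in>sdom (eta \<alpha>'). n \<ge> N \<longrightarrow> fset (the (eta \<alpha>' n)) \<inter> B \<alpha> \<noteq> {}"
      unfolding SC_def by (rule conjunct1)
  qed
  have d: "\<forall>\<beta> \<gamma> \<alpha>' X Y. is_succ lam (pr (\<beta>, \<gamma>)) \<alpha>' \<longrightarrow>
        X \<in> choices lam k A B \<beta> \<longrightarrow> Y \<in> choices lam k A B \<gamma> \<longrightarrow>
        (\<forall>n\<in>sdom (eta \<alpha>'). fset (the (eta \<alpha>' n)) \<inter> X \<noteq> {} \<and> fset (the (eta \<alpha>' n)) \<inter> Y \<noteq> {}) \<and>
        (\<forall>n\<in>sdom (eta \<alpha>'). \<forall>m\<in>sdom (eta \<alpha>').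
           (Min (fset (the (eta \<alpha>' n)) \<inter> X) < Min (fset (the (eta \<alpha>' n)) \<inter> Y)) \<longleftrightarrow>
           (Min (fset (the (eta \<alpha>' m)) \<inter> X) < Min (fset (the (eta \<alpha>' m)) \<inter> Y)))"
  proof (intro allI impI)
    fix \<beta> \<gamma> \<alpha>' X Y assume s: "is_succ lam (pr (\<beta>, \<gamma>)) \<alpha>'" and X: "X \<in> choices lam k A B \<beta>"
      and Y: "Y \<in> choices lam k A B \<gamma>"
    have sc2: "\<forall>\<beta>1 \<beta>2 X Y. pr (\<beta>1, \<beta>2) = pr (\<beta>, \<gamma>) \<longrightarrow> X \<in> choices lam k A B \<beta>1 \<longrightarrow> Y \<in> choices lam k A B \<beta>2 \<longrightarrow>
        (\<forall>n\<in>sdom (eta \<alpha>'). fset (the (eta \<alpha>' n)) \<inter> X \<noteq> {} \<and> fset (the (eta \<alpha>' n)) \<inter> Y \<noteq> {}) \<and>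
        (\<forall>n\<in>sdom (eta \<alpha>'). \<forall>m\<in>sdom (eta \<alpha>').
           (Min (fset (the (eta \<alpha>' n)) \<inter> X) < Min (fset (the (eta \<alpha>' n)) \<inter> Y)) \<longleftrightarrow>
           (Min (fset (the (eta \<alpha>' m)) \<inter> X) < Min (fset (the (eta \<alpha>' m)) \<inter> Y)))"
      using SCs[OF s] unfolding SC_def by (rule conjunct2)
    show "(\<forall>n\<in>sdom (eta \<alpha>'). fset (the (eta \<alpha>' n)) \<inter> X \<noteq> {} \<and> fset (the (eta \<alpha>' n)) \<inter> Y \<noteq> {}) \<and>
        (\<forall>n\<in>sdom (eta \<alpha>'). \<forall>m\<in>sdom (eta \<alpha>').
           (Min (fset (the (eta \<alpha>' n)) \<inter> X) < Min (fset (the (eta \<alpha>' n)) \<inter> Y)) \<longleftrightarrow>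
           (Min (fset (the (eta \<alpha>' m)) \<inter> X) < Min (fset (the (eta \<alpha>' m)) \<inter> Y)))"
      using mp[OF mp[OF mp[OF sc2[THEN spec[of _ \<beta>], THEN spec[of _ \<gamma>], THEN spec[of _ X], THEN spec[of _ Y]] HOL.refl] X] Y] .
  qed
  have a: "\<forall>\<alpha>. in_S_A lam k A (eta \<alpha>)" using G unfolding Good_def by blast
  show ?thesis
    apply (rule exI[of _ eta], rule exI[of _ \<nu>])
    using a \<nu> C c d by blast
qed

end
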